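(* Let $\rho$ be a law invariant risk measure with induced divergence $\alpha$. The following are equivalent: (1) $\alpha$ is jointly convex, i.e. $(\nu,\mu)\mapsto\alpha(\nu|\mu)$ is convex on $\mathcal P(E)\times\mathcal P(E)$ for each Polish space $E$; (2) for each Polish space $E$ and each $f\in B(E)$, the map $\mathcal P(E)\ni\mu\mapsto\rho_\mu(f)$ is concave; (3) $\tilde\rho$ is concave.
   Context: $(\Omega,\mathcal F,P)$ is a fixed nonatomic standard Borel probability space, $L^\infty=L^\infty(\Omega,\mathcal F,P)$. A risk measure is a convex $\rho:L^\infty\to\mathbb R$ that is monotone ($X\le Y$ a.s. implies $\rho(X)\le\rho(Y)$), cash additive ($\rho(X+c)=\rho(X)+c$, $c\in\mathbb R$) and normalized ($\rho(0)=0$); it is law invariant if $\rho(X)=\rho(Y)$ whenever $X,Y$ have the same law. For a Polish space $E$, $\mathcal P(E)$ is the set of Borel probability measures and $B(E)$ the bounded measurable real functions. For Polish $E$ and $\mu\in\mathcal P(E)$, $\rho_\mu(f):=\rho(f(X))$ for $f\in B(E)$, where $X:\Omega\to E$ is any measurable map with $P\circ X^{-1}=\mu$. The induced divergence is $\alpha(\nu|\mu):=\sup_{f\in B(E)}(\int_E f\,d\nu-\rho_\mu(f))$. The function $\tilde\rho$ is defined on the set of compactly supported Borel probability measures on $\mathbb R$ by $\tilde\rho(P\circ X^{-1}):=\rho(X)$ for $X\in L^\infty$. *)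

theory Defs
  imports "HOL-Probability.Probability"
begin

definition Polish_space :: "'a topology \<Rightarrow> bool" where
  "Polish_space T \<longleftrightarrow> completely_metrizable_space T \<and> separable_space T"

definition borel_of :: "'a topology \<Rightarrow> 'a measure" where
  "borel_of T = sigma (topspace T) {U. openin T U}"

definition prob_measures :: "'a topology \<Rightarrow> 'a measure set" where
  "prob_measures T = {\<mu>. prob_space \<mu> \<and> sets \<mu> = sets (borel_of T)}"

definition bounded_borel_funs :: "'a topology \<Rightarrow> ('a \<Rightarrow> real) set" where
  "bounded_borel_funs T =
     {f. f \<in> borel_measurable (borel_of T) \<and> bounded (f ` topspace T)}"

definition mix_measure :: "real \<Rightarrow> 'a measure \<Rightarrow> 'a measure \<Rightarrow> 'a measure" where
  "mix_measure t \<mu> \<nu> = measure_of (space \<mu>) (sets \<mu>)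
      (\<lambda>A. ennreal t * emeasure \<mu> A + ennreal (1 - t) * emeasure \<nu> A)"

definition nonatomic :: "'w measure \<Rightarrow> bool" where
  "nonatomic M \<longleftrightarrow> (\<forall>A\<in>sets M. measure M A > 0 \<longrightarrow>
      (\<exists>B\<in>sets M. B \<subseteq> A \<and> 0 < measure M B \<and> measure M B < measure M A))"

definition standard_borel :: "'w measure \<Rightarrow> bool" where
  "standard_borel M \<longleftrightarrow> (\<exists>T. Polish_space T \<and> topspace T = space M \<and>
      sets M = sets (borel_of T))"

text \<open>L-infinity, represented by essentially bounded measurable functions
  (a risk measure is a function on these; by monotonicity it respects a.e. equality).\<close>
definition Linf :: "'w measure \<Rightarrow> ('w \<Rightarrow> real) set" where
  "Linf M = {X. X \<in> borel_measurable M \<and> (\<exists>C. AE \<omega> in M. \<bar>X \<omega>\<bar> \<le> C)}"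

definition risk_measure :: "'w measure \<Rightarrow> (('w \<Rightarrow> real) \<Rightarrow> real) \<Rightarrow> bool" where
  "risk_measure M \<rho> \<longleftrightarrow>
     (\<forall>X\<in>Linf M. \<forall>Y\<in>Linf M. \<forall>t\<in>{0..1::real}.
        \<rho> (\<lambda>\<omega>. t * X \<omega> + (1 - t) * Y \<omega>) \<le> t * \<rho> X + (1 - t) * \<rho> Y)
   \<and> (\<forall>X\<in>Linf M. \<forall>Y\<in>Linf M. (AE \<omega> in M. X \<omega> \<le> Y \<omega>) \<longrightarrow> \<rho> X \<le> \<rho> Y)
   \<and> (\<forall>X\<in>Linf M. \<forall>c. \<rho> (\<lambda>\<omega>. X \<omega> + c) = \<rho> X + c)
   \<and> \<rho> (\<lambda>\<omega>. 0) = 0"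

definition law_invariant :: "'w measure \<Rightarrow> (('w \<Rightarrow> real) \<Rightarrow> real) \<Rightarrow> bool" where
  "law_invariant M \<rho> \<longleftrightarrow> (\<forall>X\<in>Linf M. \<forall>Y\<in>Linf M.
      distr M borel X = distr M borel Y \<longrightarrow> \<rho> X = \<rho> Y)"

definition rho_mu :: "'w measure \<Rightarrow> (('w \<Rightarrow> real) \<Rightarrow> real) \<Rightarrow> 'a topology \<Rightarrow>
    'a measure \<Rightarrow> ('a \<Rightarrow> real) \<Rightarrow> real" where
  "rho_mu M \<rho> T \<mu> f =
     \<rho> (f \<circ> (SOME X. X \<in> M \<rightarrow>\<^sub>M borel_of T \<and> distr M (borel_of T) X = \<mu>))"

definition divergence :: "'w measure \<Rightarrow> (('w \<Rightarrow> real) \<Rightarrow> real) \<Rightarrow> 'a topology \<Rightarrow>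
    'a measure \<Rightarrow> 'a measure \<Rightarrow> ereal" where
  "divergence M \<rho> T \<nu> \<mu> =
     (SUP f\<in>bounded_borel_funs T. ereal (integral\<^sup>L \<nu> f - rho_mu M \<rho> T \<mu> f))"

definition compact_supp_prob :: "real measure set" where
  "compact_supp_prob = {m. prob_space m \<and> sets m = sets (borel :: real measure) \<and>
      (\<exists>K. compact K \<and> emeasure m (UNIV - K) = 0)}"

definition rho_tilde :: "'w measure \<Rightarrow> (('w \<Rightarrow> real) \<Rightarrow> real) \<Rightarrow> real measure \<Rightarrow> real" where
  "rho_tilde M \<rho> m = \<rho> (SOME X. X \<in> Linf M \<and> distr M borel X = m)"

end

theory Submission
  imports Defs
begin

lemma space_borel_of[simp]: "space (borel_of T) = topspace T"
  unfolding borel_of_def by (simp add: space_measure_of_conv openin_subset subset_eq)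

lemma sets_borel_of: "sets (borel_of T) = sigma_sets (topspace T) {U. openin T U}"
  unfolding borel_of_def by (rule sets_measure_of) (auto dest: openin_subset)

lemma openin_in_borel_of: "openin T U \<Longrightarrow> U \<in> sets (borel_of T)"
  unfolding sets_borel_of by auto

lemma borel_of_euclidean: "borel_of (euclidean :: real topology) = borel"
  unfolding borel_of_def borel_def by simp

lemma Polish_space_euclidean_real: "Polish_space (euclidean :: real topology)"
proof -
  have "separable_space (euclidean :: real topology)"
    unfolding separable_space_def
    by (intro exI[of _ "\<rat>"]) (simp add: countable_rat Rats_closure_real)
  then show ?thesis
    by (simp add: Polish_space_def completely_metrizable_space_euclidean)
qed

context
  fixes t :: real and \<nu>1 \<nu>2 :: "'a measure"
  assumes t: "0 \<le> t" "t \<le> 1" and sets_eq: "sets \<nu>2 = sets \<nu>1"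
begin

lemma meas2: "g \<in> \<nu>1 \<rightarrow>\<^sub>M N \<Longrightarrow> g \<in> \<nu>2 \<rightarrow>\<^sub>M N"
  using measurable_cong_sets[OF sets_eq refl, of N] by blast

lemma sets_mix[simp, measurable_cong]: "sets (mix_measure t \<nu>1 \<nu>2) = sets \<nu>1"
  by (simp add: mix_measure_def)

lemma space_mix[simp]: "space (mix_measure t \<nu>1 \<nu>2) = space \<nu>1"
  by (simp add: mix_measure_def)

lemma emeasure_mix:
  "emeasure (mix_measure t \<nu>1 \<nu>2) A = ennreal t * emeasure \<nu>1 A + ennreal (1 - t) * emeasure \<nu>2 A"
  (is "_ = ?\<mu> A")
proof (cases "A \<in> sets \<nu>1")
  case True
  have sa: "sigma_algebra (space \<nu>1) (sets \<nu>1)" ..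
  have pos: "positive (sets \<nu>1) ?\<mu>" by (simp add: positive_def sets_eq[symmetric])
  have ca: "countably_additive (sets \<nu>1) ?\<mu>"
  proof (rule countably_additiveI)
    fix A :: "nat \<Rightarrow> _"  assume *: "range A \<subseteq> sets \<nu>1" "disjoint_family A"
    have A2: "range A \<subseteq> sets \<nu>2" using * sets_eq by auto
    have "(\<Sum>i. ?\<mu> (A i)) = ennreal t * (\<Sum>i. emeasure \<nu>1 (A i)) + ennreal (1-t) * (\<Sum>i. emeasure \<nu>2 (A i))"
      by (simp add: suminf_add[symmetric])
    also have "\<dots> = ?\<mu> (\<Union>i. A i)" using * A2 by (simp add: suminf_emeasure)
    finally show "(\<Sum>i. ?\<mu> (A i)) = ?\<mu> (\<Union>i. A i)" .
  qed
  show ?thesis unfolding mix_measure_def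
    by (rule emeasure_measure_of_sigma[OF sa pos ca True])
next
  case False
  then show ?thesis using sets_eq
    by (simp add: emeasure_notin_sets)
qed

lemma nn_integral_mix:
  assumes f: "f \<in> borel_measurable \<nu>1"
  shows "nn_integral (mix_measure t \<nu>1 \<nu>2) f = ennreal t * nn_integral \<nu>1 f + ennreal (1-t) * nn_integral \<nu>2 f"
  using f
proof induction
  case (cong f g)
  have "space \<nu>2 = space \<nu>1" using sets_eq_imp_space_eq[OF sets_eq] .
  with cong show ?case
    by (simp add: cong.hyps cong: nn_integral_cong_simp)
next
  case (set A)
  then show ?case using sets_eq by (simp add: emeasure_mix)
next
  case (mult f c)
  have "f \<in> borel_measurable \<nu>2" using mult(2) by (rule meas2)
  with mult show ?case
    by (simp add: nn_integral_cmult distrib_left mult.assoc mult.left_commute)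
next
  case (add f g)
  have "f \<in> borel_measurable \<nu>2" "g \<in> borel_measurable \<nu>2"
    using add by (auto intro: meas2)
  with add show ?case
    by (simp add: nn_integral_add distrib_left algebra_simps)
next
  case (seq U)
  have SUPN: "nn_integral N (\<Squnion> range U) = (SUP i. nn_integral N (U i))" if N: "sets N = sets \<nu>1" for N
  proof -
    have "U i \<in> borel_measurable N" for i
      using seq(1)[of i] measurable_cong_sets[OF N refl, of borel] by blast
    then have "(\<integral>\<^sup>+ x. (SUP i. U i x) \<partial>N) = (SUP i. nn_integral N (U i))"
      using seq(3) by (rule nn_integral_monotone_convergence_SUP[rotated])
    moreover have "(\<Squnion> range U) = (\<lambda>x. SUP i. U i x)" by (rule ext) (simp only: SUP_apply)
    ultimately show ?thesis by simp
  qed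
  have "nn_integral (mix_measure t \<nu>1 \<nu>2) (\<Squnion> range U) = (SUP i. nn_integral (mix_measure t \<nu>1 \<nu>2) (U i))"
    by (rule SUPN) simp
  also have "\<dots> = (SUP i. ennreal t * nn_integral \<nu>1 (U i) + ennreal (1-t) * nn_integral \<nu>2 (U i))"
    using seq by simp
  also have "\<dots> = (SUP i. ennreal t * nn_integral \<nu>1 (U i)) + (SUP i. ennreal (1-t) * nn_integral \<nu>2 (U i))"
  proof (rule ennreal_SUP_add)
    have le: "U i x \<le> U j x" if "i \<le> j" for i j x using seq(3) that by (simp add: incseq_def le_fun_def)
    show "incseq (\<lambda>i. ennreal t * nn_integral \<nu>1 (U i))"
      unfolding incseq_def by (intro allI impI mult_left_mono nn_integral_mono le) auto
    show "incseq (\<lambda>i. ennreal (1-t) * nn_integral \<nu>2 (U i))"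
      unfolding incseq_def by (intro allI impI mult_left_mono nn_integral_mono le) auto
  qed
  also have "\<dots> = ennreal t * (SUP i. nn_integral \<nu>1 (U i)) + ennreal (1-t) * (SUP i. nn_integral \<nu>2 (U i))"
    by (simp add: SUP_mult_left_ennreal)
  also have "\<dots> = ennreal t * nn_integral \<nu>1 (\<Squnion> range U) + ennreal (1-t) * nn_integral \<nu>2 (\<Squnion> range U)"
    using SUPN[OF refl] SUPN[OF sets_eq] by simp
  finally show ?case .
qed

end


lemma prob_space_mix:
  assumes t: "0 \<le> t" "t \<le> 1" and sets_eq: "sets \<nu>2 = sets \<nu>1"
    and p: "prob_space \<nu>1" "prob_space \<nu>2"
  shows "prob_space (mix_measure t \<nu>1 \<nu>2)"
proof (rule prob_spaceI)
  have sp: "space \<nu>2 = space \<nu>1" using sets_eq_imp_space_eq[OF sets_eq] .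
  have "emeasure (mix_measure t \<nu>1 \<nu>2) (space (mix_measure t \<nu>1 \<nu>2)) = ennreal t * 1 + ennreal (1-t) * 1"
    using prob_space.emeasure_space_1[OF p(1)] prob_space.emeasure_space_1[OF p(2)] sp
    by (simp add: emeasure_mix[OF t sets_eq] space_mix[OF t sets_eq])
  also have "\<dots> = 1" using t by (simp add: ennreal_plus[symmetric] del: ennreal_plus)
  finally show "emeasure (mix_measure t \<nu>1 \<nu>2) (space (mix_measure t \<nu>1 \<nu>2)) = 1" .
qed

lemma integral_mix:
  fixes f :: "'a \<Rightarrow> real"
  assumes t: "0 \<le> t" "t \<le> 1" and sets_eq: "sets \<nu>2 = sets \<nu>1"
    and p: "prob_space \<nu>1" "prob_space \<nu>2"
    and f: "f \<in> borel_measurable \<nu>1" and C: "\<And>x. x \<in> space \<nu>1 \<Longrightarrow> \<bar>f x\<bar> \<le> C"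
  shows "integral\<^sup>L (mix_measure t \<nu>1 \<nu>2) f = t * integral\<^sup>L \<nu>1 f + (1 - t) * integral\<^sup>L \<nu>2 f"
proof -
  let ?m = "mix_measure t \<nu>1 \<nu>2"
  have sp: "space \<nu>2 = space \<nu>1" using sets_eq_imp_space_eq[OF sets_eq] .
  have pm: "prob_space ?m" by (rule prob_space_mix[OF t sets_eq p])
  have spm: "space ?m = space \<nu>1" by (rule space_mix[OF t sets_eq])
  define g where "g x = f x + C" for x
  have gm1: "g \<in> borel_measurable \<nu>1" using f unfolding g_def by measurable
  have gm2: "g \<in> borel_measurable \<nu>2" using gm1 measurable_cong_sets[OF sets_eq refl, of borel] by blast
  have gmm: "g \<in> borel_measurable ?m" using gm1 measurable_cong_sets[OF sets_mix[OF t sets_eq] refl, of borel] by blast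
  have fm2: "f \<in> borel_measurable \<nu>2" using f measurable_cong_sets[OF sets_eq refl, of borel] by blast
  have fmm: "f \<in> borel_measurable ?m" using f measurable_cong_sets[OF sets_mix[OF t sets_eq] refl, of borel] by blast
  have gnn: "x \<in> space \<nu>1 \<Longrightarrow> 0 \<le> g x" for x using C[of x] unfolding g_def by auto
  have gb: "x \<in> space \<nu>1 \<Longrightarrow> norm (g x) \<le> 2 * C" for x using C[of x] unfolding g_def by auto
  have fb: "x \<in> space \<nu>1 \<Longrightarrow> norm (f x) \<le> C" for x using C[of x] by auto
  have ib: "integrable N h" if "prob_space N" "h \<in> borel_measurable N" "\<And>x. x \<in> space N \<Longrightarrow> norm (h x) \<le> B" for N :: "'a measure" and h :: "'a \<Rightarrow> real" and B
  proof -
    interpret prob_space N by fact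
    show ?thesis by (rule integrable_const_bound[where B=B]) (use that in \<open>auto intro!: AE_I2\<close>)
  qed
  have int1: "integrable \<nu>1 g" "integrable \<nu>1 f"
    using ib[OF p(1) gm1 gb] ib[OF p(1) f fb] by auto
  have int2: "integrable \<nu>2 g" "integrable \<nu>2 f"
    using ib[OF p(2) gm2 gb] ib[OF p(2) fm2 fb] sp by auto
  have intm: "integrable ?m g" "integrable ?m f"
    using ib[OF pm gmm gb] ib[OF pm fmm fb] spm by auto
  have "ennreal (integral\<^sup>L ?m g) = nn_integral ?m g"
    using intm gnn spm by (intro nn_integral_eq_integral[symmetric]) auto
  also have "\<dots> = ennreal t * nn_integral \<nu>1 g + ennreal (1-t) * nn_integral \<nu>2 g"
    by (rule nn_integral_mix[OF t sets_eq]) (use gm1 in auto)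
  also have "nn_integral \<nu>1 g = ennreal (integral\<^sup>L \<nu>1 g)"
    using int1 gnn by (intro nn_integral_eq_integral) auto
  also have "nn_integral \<nu>2 g = ennreal (integral\<^sup>L \<nu>2 g)"
    using int2 gnn sp by (intro nn_integral_eq_integral) auto
  also have "ennreal t * ennreal (integral\<^sup>L \<nu>1 g) + ennreal (1-t) * ennreal (integral\<^sup>L \<nu>2 g)
      = ennreal (t * integral\<^sup>L \<nu>1 g + (1-t) * integral\<^sup>L \<nu>2 g)"
  proof -
    have i1: "0 \<le> integral\<^sup>L \<nu>1 g" "0 \<le> integral\<^sup>L \<nu>2 g"
      using gnn sp by (auto intro!: integral_nonneg_AE)
    then show ?thesis using t
      by (subst ennreal_plus) (auto simp: ennreal_mult)
  qed
  finally have eq: "integral\<^sup>L ?m g = t * integral\<^sup>L \<nu>1 g + (1-t) * integral\<^sup>L \<nu>2 g"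
  proof (subst (asm) ennreal_inj)
    show "0 \<le> integral\<^sup>L ?m g" using gnn spm by (intro integral_nonneg_AE) auto
    have "0 \<le> integral\<^sup>L \<nu>1 g" "0 \<le> integral\<^sup>L \<nu>2 g"
      using gnn sp by (auto intro!: integral_nonneg_AE)
    then show "0 \<le> t * integral\<^sup>L \<nu>1 g + (1-t) * integral\<^sup>L \<nu>2 g" using t by auto
  qed
  have gi: "integral\<^sup>L N g = integral\<^sup>L N f + C" if "prob_space N" "integrable N f" for N
  proof -
    interpret prob_space N by fact
    show ?thesis using that(2) prob_space unfolding g_def by (simp add: integral_add)
  qed
  show ?thesis using eq gi[OF pm intm(2)] gi[OF p(1) int1(2)] gi[OF p(2) int2(2)]
    by (simp add: algebra_simps)
qed

lemma distr_mix:
  assumes t: "0 \<le> t" "t \<le> 1" and sets_eq: "sets \<nu>2 = sets \<nu>1"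
    and f: "f \<in> \<nu>1 \<rightarrow>\<^sub>M N"
  shows "distr (mix_measure t \<nu>1 \<nu>2) N f = mix_measure t (distr \<nu>1 N f) (distr \<nu>2 N f)"
proof -
  have sp: "space \<nu>2 = space \<nu>1" using sets_eq_imp_space_eq[OF sets_eq] .
  have f2: "f \<in> \<nu>2 \<rightarrow>\<^sub>M N" using f measurable_cong_sets[OF sets_eq refl, of N] by blast
  have fm: "f \<in> mix_measure t \<nu>1 \<nu>2 \<rightarrow>\<^sub>M N" using f measurable_cong_sets[OF sets_mix[OF t sets_eq] refl, of N] by blast
  have se: "sets (distr \<nu>2 N f) = sets (distr \<nu>1 N f)" by simp
  show ?thesis
  proof (rule measure_eqI)
    show "sets (distr (mix_measure t \<nu>1 \<nu>2) N f) = sets (mix_measure t (distr \<nu>1 N f) (distr \<nu>2 N f))"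
      by (simp add: sets_mix[OF t se])
    fix A assume "A \<in> sets (distr (mix_measure t \<nu>1 \<nu>2) N f)"
    then have A: "A \<in> sets N" by simp
    show "emeasure (distr (mix_measure t \<nu>1 \<nu>2) N f) A = emeasure (mix_measure t (distr \<nu>1 N f) (distr \<nu>2 N f)) A"
      using A f f2 fm sp
      by (simp add: emeasure_distr emeasure_mix[OF t sets_eq] emeasure_mix[OF t se] space_mix[OF t sets_eq])
  qed
qed

definition enc4 :: "(nat \<Rightarrow> bool) \<Rightarrow> real" where
  "enc4 b = (\<Sum>j. (if b j then 1 else 0) * (1/4::real)^(Suc j))"

definition dec4 :: "real \<Rightarrow> nat \<Rightarrow> bool" where
  "dec4 r j \<longleftrightarrow> \<lfloor>4^(Suc j) * r\<rfloor> mod 4 = 1"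

lemma summable_enc4: "summable (\<lambda>j. (if b j then 1 else 0) * (1/4::real)^(Suc j))"
proof (rule summable_comparison_test[where g="\<lambda>j. (1/4::real)^(Suc j)"])
  show "\<exists>N. \<forall>n\<ge>N. norm ((if b n then 1 else 0) * (1/4::real)^(Suc n)) \<le> (1/4)^(Suc n)"
    by auto
  show "summable (\<lambda>j. (1/4::real)^(Suc j))"
    by (subst power_Suc) (intro summable_mult summable_geometric, simp)
qed

lemma dec4_enc4: "dec4 (enc4 b) n = b n"
proof -
  define c where "c j = (if b j then 1 else 0 :: real)" for j
  define f where "f j = c j * (1/4::real)^(Suc j)" for j
  have sf: "summable f" using summable_enc4[of b] unfolding f_def c_def .
  have split: "enc4 b = (\<Sum>m. f (m + Suc n)) + (\<Sum>j<Suc n. f j)"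
    unfolding enc4_def using suminf_split_initial_segment[OF sf, of "Suc n"]
    unfolding f_def c_def .
  define A :: int where "A = (\<Sum>j<Suc n. (if b j then 1 else 0) * 4^(n-j))"
  have head: "4^(Suc n) * (\<Sum>j<Suc n. f j) = of_int A"
  proof -
    have "4^(Suc n) * f j = of_int ((if b j then 1 else 0) * 4^(n-j))" if "j < Suc n" for j
    proof -
      have "(4::real)^(Suc n) = 4^(n-j) * 4^(Suc j)" using that by (simp flip: power_add)
      then show ?thesis unfolding f_def c_def by (simp add: power_one_over field_simps)
    qed
    note * = this
    have "4^(Suc n) * (\<Sum>j<Suc n. f j) = (\<Sum>j<Suc n. 4^(Suc n) * f j)" by (rule sum_distrib_left)
    also have "\<dots> = (\<Sum>j<Suc n. of_int ((if b j then 1 else 0) * 4^(n-j)))"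
      by (rule sum.cong[OF refl]) (rule *, simp)
    also have "\<dots> = of_int A" unfolding A_def by (simp only: of_int_sum)
    finally show ?thesis .
  qed
  define \<tau> where "\<tau> = (\<Sum>m. c (m + Suc n) * (1/4::real)^(Suc m))"
  have sg: "summable (\<lambda>m. (1/4::real)^(Suc m))"
    by (subst power_Suc) (intro summable_mult summable_geometric, simp)
  have st: "summable (\<lambda>m. c (m + Suc n) * (1/4::real)^(Suc m))"
    using summable_enc4[of "\<lambda>m. b (m + Suc n)"] unfolding c_def .
  have tail: "4^(Suc n) * (\<Sum>m. f (m + Suc n)) = \<tau>"
  proof -
    have eq: "4^(Suc n) * f (m + Suc n) = c (m + Suc n) * (1/4::real)^(Suc m)" for m
    proof -
      have "(1/4::real)^(Suc (m + Suc n)) = (1/4)^(Suc m) * (1/4)^(Suc n)" by (simp flip: power_add)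
      then show ?thesis unfolding f_def by (simp add: power_one_over field_simps)
    qed
    have sm: "summable (\<lambda>m. f (m + Suc n))" using sf by (rule summable_ignore_initial_segment)
    have "4^(Suc n) * (\<Sum>m. f (m + Suc n)) = (\<Sum>m. 4^(Suc n) * f (m + Suc n))"
      by (rule suminf_mult[OF sm, symmetric])
    also have "\<dots> = \<tau>" unfolding \<tau>_def eq ..
    finally show ?thesis .
  qed
  have \<tau>0: "0 \<le> \<tau>" unfolding \<tau>_def c_def by (intro suminf_nonneg st[unfolded c_def]) auto
  have "\<tau> \<le> (\<Sum>m. (1/4::real)^(Suc m))"
    unfolding \<tau>_def by (rule suminf_le[OF _ st sg]) (auto simp: c_def)
  also have "(\<Sum>m. (1/4::real)^(Suc m)) = (\<Sum>m. (1/4) * (1/4::real)^m)" by simp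
  also have "\<dots> = (1/4) * (\<Sum>m. (1/4::real)^m)" by (rule suminf_mult) (rule summable_geometric, simp)
  also have "\<dots> = 1/3" using suminf_geometric[of "1/4::real"] by simp
  finally have \<tau>1: "\<tau> < 1" by simp
  have "4^(Suc n) * enc4 b = of_int A + \<tau>" using split head tail by (simp add: distrib_left)
  then have fl: "\<lfloor>4^(Suc n) * enc4 b\<rfloor> = A" using \<tau>0 \<tau>1 by (simp add: floor_unique)
  have "A = 4 * (\<Sum>j<n. (if b j then 1 else 0) * 4^(n - Suc j)) + (if b n then 1 else 0)"
  proof -
    have "(\<Sum>j<n. (if b j then 1 else 0) * (4::int)^(n-j)) = 4 * (\<Sum>j<n. (if b j then 1 else 0) * 4^(n - Suc j))"
      unfolding sum_distrib_left
      by (intro sum.cong refl) (auto simp: Suc_diff_Suc power_Suc[symmetric] simp del: power_Suc)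
    then show ?thesis unfolding A_def by simp
  qed
  then have "A mod 4 = (if b n then 1 else 0)" by simp
  then show ?thesis unfolding dec4_def fl by simp
qed


lemma pred_aux:
  fixes c :: "nat \<Rightarrow> real \<Rightarrow> nat" and R :: "nat \<Rightarrow> nat \<Rightarrow> nat \<Rightarrow> bool" and Q :: "nat \<Rightarrow> nat \<Rightarrow> bool"
  assumes [measurable]: "\<And>n. c n \<in> borel \<rightarrow>\<^sub>M count_space UNIV"
  shows "{r. ((\<forall>m. \<exists>N. \<forall>n\<ge>N. \<forall>n'\<ge>N. R m (c n r) (c n' r)) \<and> (\<exists>m K. \<forall>k\<ge>K. Q m (c k r)))
     \<or> (\<not> (\<forall>m. \<exists>N. \<forall>n\<ge>N. \<forall>n'\<ge>N. R m (c n r) (c n' r)) \<and> B)} \<in> sets borel"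
proof -
  have "Measurable.pred borel (\<lambda>r. ((\<forall>m. \<exists>N. \<forall>n\<ge>N. \<forall>n'\<ge>N. R m (c n r) (c n' r)) \<and> (\<exists>m K. \<forall>k\<ge>K. Q m (c k r)))
     \<or> (\<not> (\<forall>m. \<exists>N. \<forall>n\<ge>N. \<forall>n'\<ge>N. R m (c n r) (c n' r)) \<and> B))"
    by measurable
  then show ?thesis by (simp add: pred_def)
qed

lemma polish_encode:
  fixes T :: "'a topology"
  assumes P: "Polish_space T" and ne: "topspace T \<noteq> {}"
  shows "\<exists>\<phi> \<psi>. \<phi> \<in> borel_of T \<rightarrow>\<^sub>M (borel :: real measure) \<and> \<psi> \<in> (borel :: real measure) \<rightarrow>\<^sub>M borel_of T
      \<and> (\<forall>x\<in>topspace T. \<psi> (\<phi> x) = x)"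
proof -
  from P obtain E d where ms: "Metric_space E d" and mc: "Metric_space.mcomplete E d"
      and T: "T = Metric_space.mtopology E d"
    unfolding Polish_space_def completely_metrizable_space_def by blast
  interpret Metric_space E d by (rule ms)
  have tsp: "topspace T = E" using T by simp
  from P obtain C where C: "countable C" "C \<subseteq> E" "T closure_of C = E"
    unfolding Polish_space_def separable_space_def tsp by blast
  have Cne: "C \<noteq> {}" using C(3) ne tsp by auto
  define q where "q = from_nat_into C"
  have qC: "q i \<in> C" for i unfolding q_def using Cne by (rule from_nat_into)
  have qE: "q i \<in> E" for i using qC C(2) by auto
  have dense: "\<exists>i. d (q i) x < \<epsilon>" if xe: "x \<in> E" "\<epsilon> > 0" for x \<epsilon>
  proof -
    have "x \<in> mtopology closure_of C" using C(3) xe(1) T by simp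
    then obtain y where "y \<in> C" "y \<in> mball x \<epsilon>" using xe(2) unfolding metric_closure_of by blast
    moreover then obtain i where "q i = y" unfolding q_def using from_nat_into_surj[OF C(1)] by blast
    ultimately show ?thesis by (auto simp: commute)
  qed
  define rad where "rad k = 1 / real (Suc k)" for k
  have rad_pos: "rad k > 0" for k unfolding rad_def by simp
  have rad_small: "\<exists>m. c * rad m < \<epsilon>" if "\<epsilon> > 0" for \<epsilon> c :: real
  proof -
    obtain m :: nat where m: "c / \<epsilon> < real m" using reals_Archimedean2 by blast
    have "c < \<epsilon> * real m" using m \<open>\<epsilon> > 0\<close> by (simp add: field_simps)
    also have "\<dots> \<le> \<epsilon> * real (Suc m)" using \<open>\<epsilon> > 0\<close> by simp
    finally have "c * rad m < \<epsilon>" unfolding rad_def by (simp add: field_simps)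
    then show ?thesis ..
  qed
  have rad_mono: "rad k \<le> rad K" if "K \<le> k" for k K
    unfolding rad_def using that by (simp add: frac_le)
  define bit where "bit x j = (x \<in> mball (q (fst (prod_decode j))) (rad (snd (prod_decode j))))" for x j
  define \<phi> where "\<phi> x = enc4 (bit x)" for x
  define c where "c k r = (LEAST i. dec4 r (prod_encode (i,k)))" for k r
  define s where "s r k = q (c k r)" for r k
  obtain x0 where x0: "x0 \<in> E" using ne tsp by auto
  define \<psi> where "\<psi> r = (if MCauchy (s r) then (SOME y. limitin mtopology (s r) y sequentially) else x0)" for r

  have c_phi: "d (q (c k (\<phi> x))) x < rad k" if x: "x \<in> E" for x k
  proof -
    have eq: "dec4 (\<phi> x) (prod_encode (i,k)) \<longleftrightarrow> d (q i) x < rad k" for i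
      unfolding \<phi>_def dec4_enc4 bit_def using x qE by simp
    have "\<exists>i. dec4 (\<phi> x) (prod_encode (i,k))" unfolding eq using dense[OF x rad_pos] .
    then have "dec4 (\<phi> x) (prod_encode (c k (\<phi> x), k))" unfolding c_def by (rule LeastI_ex)
    then show ?thesis unfolding eq .
  qed
  have lim_phi: "limitin mtopology (s (\<phi> x)) x sequentially" if x: "x \<in> E" for x
    unfolding limitin_metric
  proof (intro conjI allI impI x)
    fix \<epsilon> :: real assume "\<epsilon> > 0"
    then obtain K where K: "1 * rad K < \<epsilon>" using rad_small by blast
    show "\<forall>\<^sub>F k in sequentially. s (\<phi> x) k \<in> E \<and> d (s (\<phi> x) k) x < \<epsilon>"
      unfolding eventually_sequentially
    proof (intro exI allI impI conjI)
      fix k assume "K \<le> k"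
      show "s (\<phi> x) k \<in> E" unfolding s_def by (rule qE)
      have "d (s (\<phi> x) k) x < rad k" unfolding s_def by (rule c_phi[OF x])
      also have "\<dots> \<le> rad K" using rad_mono[OF \<open>K \<le> k\<close>] .
      finally show "d (s (\<phi> x) k) x < \<epsilon>" using K by simp
    qed
  qed
  have psi_phi: "\<psi> (\<phi> x) = x" if x: "x \<in> E" for x
  proof -
    have cau: "MCauchy (s (\<phi> x))"
      by (rule convergent_imp_MCauchy[OF _ lim_phi[OF x]]) (auto simp: s_def qE)
    have "limitin mtopology (s (\<phi> x)) (SOME y. limitin mtopology (s (\<phi> x)) y sequentially) sequentially"
      using lim_phi[OF x] by (rule someI)
    then have "(SOME y. limitin mtopology (s (\<phi> x)) y sequentially) = x"
      using lim_phi[OF x] by (rule limitin_metric_unique) simp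
    then show ?thesis unfolding \<psi>_def using cau by simp
  qed

  have bit_meas: "(\<lambda>x. if bit x j then 1 else 0 :: real) \<in> borel_measurable (borel_of T)" for j
  proof -
    have "(\<lambda>x. if bit x j then 1 else 0 :: real) = indicator (mball (q (fst (prod_decode j))) (rad (snd (prod_decode j))))"
      unfolding bit_def by (auto simp: indicator_def)
    moreover have "mball (q (fst (prod_decode j))) (rad (snd (prod_decode j))) \<in> sets (borel_of T)"
      unfolding T by (rule openin_in_borel_of) (rule openin_mball)
    ultimately show ?thesis by simp
  qed
  have phi_meas: "\<phi> \<in> borel_measurable (borel_of T)"
  proof (rule borel_measurable_LIMSEQ_real)
    fix x show "(\<lambda>n. \<Sum>j<n. (if bit x j then 1 else 0) * (1/4::real)^(Suc j)) \<longlonglongrightarrow> \<phi> x"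
      unfolding \<phi>_def enc4_def by (rule summable_LIMSEQ[OF summable_enc4])
  next
    fix n show "(\<lambda>x. \<Sum>j<n. (if bit x j then 1 else 0) * (1/4::real)^(Suc j)) \<in> borel_measurable (borel_of T)"
      using bit_meas by (intro borel_measurable_sum borel_measurable_times) auto
  qed

  have c_meas[measurable]: "c k \<in> (borel :: real measure) \<rightarrow>\<^sub>M count_space UNIV" for k
  proof -
    have "Measurable.pred borel (\<lambda>r::real. \<lfloor>4^(Suc j) * r\<rfloor> mod 4 = 1)" for j by measurable
    then show ?thesis unfolding c_def dec4_def by (rule measurable_Least)
  qed
  have cau_iff: "MCauchy (s r) \<longleftrightarrow> (\<forall>m. \<exists>N. \<forall>n\<ge>N. \<forall>n'\<ge>N. d (q (c n r)) (q (c n' r)) < rad m)" for r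
  proof
    assume mc: "MCauchy (s r)"
    show "\<forall>m. \<exists>N. \<forall>n\<ge>N. \<forall>n'\<ge>N. d (q (c n r)) (q (c n' r)) < rad m"
    proof
      fix m
      from mc rad_pos[of m] obtain N where N: "\<And>n n'. N \<le> n \<Longrightarrow> N \<le> n' \<Longrightarrow> d (s r n) (s r n') < rad m"
        unfolding MCauchy_def by meson
      show "\<exists>N. \<forall>n\<ge>N. \<forall>n'\<ge>N. d (q (c n r)) (q (c n' r)) < rad m"
        using N unfolding s_def by blast
    qed
  next
    assume H: "\<forall>m. \<exists>N. \<forall>n\<ge>N. \<forall>n'\<ge>N. d (q (c n r)) (q (c n' r)) < rad m"
    show "MCauchy (s r)" unfolding MCauchy_def
    proof (intro conjI allI impI)
      show "range (s r) \<subseteq> E" by (auto simp: s_def qE)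
      fix \<epsilon> :: real assume "\<epsilon> > 0"
      then obtain m where m: "1 * rad m < \<epsilon>" using rad_small by blast
      from H obtain N where N: "\<forall>n\<ge>N. \<forall>n'\<ge>N. d (q (c n r)) (q (c n' r)) < rad m" by blast
      show "\<exists>N. \<forall>n n'. N \<le> n \<longrightarrow> N \<le> n' \<longrightarrow> d (s r n) (s r n') < \<epsilon>"
      proof (intro exI allI impI)
        fix n n' assume "N \<le> n" "N \<le> n'"
        then have "d (s r n) (s r n') < rad m" using N unfolding s_def by blast
        then show "d (s r n) (s r n') < \<epsilon>" using m by simp
      qed
    qed
  qed
  have psi_E: "\<psi> r \<in> E" for r
  proof (cases "MCauchy (s r)")
    case True
    then obtain y where "limitin mtopology (s r) y sequentially" using mc unfolding mcomplete_def by blast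
    then have "limitin mtopology (s r) (SOME y. limitin mtopology (s r) y sequentially) sequentially"
      by (rule someI)
    then have "(SOME y. limitin mtopology (s r) y sequentially) \<in> E"
      using limitin_topspace by fastforce
    then show ?thesis unfolding \<psi>_def using True by simp
  next
    case False then show ?thesis unfolding \<psi>_def using x0 by simp
  qed
  have psi_open: "\<psi> r \<in> U \<longleftrightarrow> (MCauchy (s r) \<and> (\<exists>m K. \<forall>k\<ge>K. mball (q (c k r)) (2 * rad m) \<subseteq> U))
      \<or> (\<not> MCauchy (s r) \<and> x0 \<in> U)" if U: "openin mtopology U" for r U
  proof (cases "MCauchy (s r)")
    case False then show ?thesis unfolding \<psi>_def by simp
  next
    case True
    then obtain y0 where "limitin mtopology (s r) y0 sequentially" using mc unfolding mcomplete_def by blast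
    then have "limitin mtopology (s r) (SOME y. limitin mtopology (s r) y sequentially) sequentially"
      by (rule someI)
    then have lim: "limitin mtopology (s r) (\<psi> r) sequentially"
      unfolding \<psi>_def using True by simp
    then have yE: "\<psi> r \<in> E" and ev: "\<And>\<epsilon>. \<epsilon> > 0 \<Longrightarrow> \<forall>\<^sub>F k in sequentially. s r k \<in> E \<and> d (s r k) (\<psi> r) < \<epsilon>"
      unfolding limitin_metric by auto
    have "\<psi> r \<in> U \<longleftrightarrow> (\<exists>m K. \<forall>k\<ge>K. mball (q (c k r)) (2 * rad m) \<subseteq> U)"
    proof
      assume "\<psi> r \<in> U"
      then obtain \<epsilon> where \<epsilon>: "\<epsilon> > 0" "mball (\<psi> r) \<epsilon> \<subseteq> U" using U unfolding openin_mtopology by blast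
      then obtain m where m: "3 * rad m < \<epsilon>" using rad_small by blast
      obtain K where K: "\<And>k. k \<ge> K \<Longrightarrow> d (s r k) (\<psi> r) < rad m"
        using ev[OF rad_pos[of m]] unfolding eventually_sequentially by blast
      have "mball (q (c k r)) (2 * rad m) \<subseteq> U" if "k \<ge> K" for k
      proof
        fix z assume z: "z \<in> mball (q (c k r)) (2 * rad m)"
        then have zE: "z \<in> E" and dz: "d (q (c k r)) z < 2 * rad m" by auto
        have "d (\<psi> r) z \<le> d (\<psi> r) (q (c k r)) + d (q (c k r)) z" using triangle[OF yE qE zE] .
        also have "\<dots> < rad m + 2 * rad m" using K[OF that] dz by (simp add: s_def commute)
        finally have "z \<in> mball (\<psi> r) \<epsilon>" using m zE yE by simp
        then show "z \<in> U" using \<epsilon>(2) by blast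
      qed
      then show "\<exists>m K. \<forall>k\<ge>K. mball (q (c k r)) (2 * rad m) \<subseteq> U" by blast
    next
      assume "\<exists>m K. \<forall>k\<ge>K. mball (q (c k r)) (2 * rad m) \<subseteq> U"
      then obtain m K1 where K1: "\<And>k. k \<ge> K1 \<Longrightarrow> mball (q (c k r)) (2 * rad m) \<subseteq> U" by blast
      obtain K2 where K2: "\<And>k. k \<ge> K2 \<Longrightarrow> d (s r k) (\<psi> r) < rad m"
        using ev[OF rad_pos[of m]] unfolding eventually_sequentially by blast
      have "d (q (c (max K1 K2) r)) (\<psi> r) < 2 * rad m"
        using K2[of "max K1 K2"] rad_pos[of m] by (simp add: s_def)
      then have "\<psi> r \<in> mball (q (c (max K1 K2) r)) (2 * rad m)" using yE qE by simp
      then show "\<psi> r \<in> U" using K1[of "max K1 K2"] by auto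
    qed
    then show ?thesis using True by simp
  qed
  have psi_meas: "\<psi> \<in> (borel :: real measure) \<rightarrow>\<^sub>M borel_of T"
    unfolding borel_of_def
  proof (rule measurable_measure_of)
    show "{U. openin T U} \<subseteq> Pow (topspace T)" by (auto dest: openin_subset)
    show "\<psi> \<in> space borel \<rightarrow> topspace T" using psi_E tsp by auto
    fix U assume "U \<in> {U. openin T U}"
    then have U: "openin mtopology U" using T by simp
    have "\<psi> -` U \<inter> space borel = {r. \<psi> r \<in> U}" by auto
    also have "\<dots> = {r. ((\<forall>m. \<exists>N. \<forall>n\<ge>N. \<forall>n'\<ge>N. d (q (c n r)) (q (c n' r)) < rad m)
          \<and> (\<exists>m K. \<forall>k\<ge>K. mball (q (c k r)) (2 * rad m) \<subseteq> U))
       \<or> (\<not> (\<forall>m. \<exists>N. \<forall>n\<ge>N. \<forall>n'\<ge>N. d (q (c n r)) (q (c n' r)) < rad m) \<and> x0 \<in> U)}"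
      by (rule Collect_cong) (simp only: psi_open[OF U] cau_iff)
    also have "\<dots> \<in> sets borel"
      by (rule pred_aux[where R="\<lambda>m i j. d (q i) (q j) < rad m" and Q="\<lambda>m i. mball (q i) (2 * rad m) \<subseteq> U"]) (rule c_meas)
    finally show "\<psi> -` U \<inter> space borel \<in> sets borel" .
  qed
  show ?thesis using phi_meas psi_meas psi_phi tsp by blast
qed

lemma cont_cdf_level:
  assumes rd: "real_distribution \<kappa>" and cont: "\<And>x. isCont (cdf \<kappa>) x"
    and u: "0 < u" "u < 1"
  shows "\<exists>x. (\<forall>y. cdf \<kappa> y \<le> u \<longleftrightarrow> y \<le> x) \<and> cdf \<kappa> x = u"
proof -
  interpret real_distribution \<kappa> by (rule rd)
  let ?F = "cdf \<kappa>"
  define S where "S = {y. ?F y \<le> u}"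
  have "\<forall>\<^sub>F y in at_bot. ?F y < u" using cdf_lim_at_bot u(1) by (rule order_tendstoD(2))
  then obtain y0 where "?F y0 < u" using eventually_happens'[OF trivial_limit_at_bot_linorder] by blast
  then have "y0 \<in> S" unfolding S_def by simp
  then have Sne: "S \<noteq> {}" by blast
  have "\<forall>\<^sub>F y in at_top. u < ?F y" using cdf_lim_at_top_prob u(2) by (rule order_tendstoD(1))
  then obtain N where N: "\<And>y. y \<ge> N \<Longrightarrow> u < ?F y" unfolding eventually_at_top_linorder by blast
  have Sbdd: "bdd_above S"
  proof (rule bdd_aboveI[of _ N])
    fix y assume "y \<in> S" then show "y \<le> N" using N[of y] unfolding S_def by force
  qed
  define x where "x = Sup S"
  have up: "y \<le> x" if "y \<in> S" for y unfolding x_def using that Sbdd by (rule cSup_upper)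
  have below: "?F y \<le> u" if "y < x" for y
  proof -
    from that obtain s where "s \<in> S" "y < s" unfolding x_def using less_cSup_iff[OF Sne Sbdd] by blast
    then show ?thesis unfolding S_def using cdf_nondecreasing[of y s] by auto
  qed
  have above: "u < ?F y" if "x < y" for y
    using up[of y] that unfolding S_def by force
  have Fx_le: "?F x \<le> u"
  proof (rule tendsto_upperbound)
    show "(?F \<longlongrightarrow> ?F x) (at_left x)" using cont[of x] by (simp add: isCont_def filterlim_at_split)
    show "\<forall>\<^sub>F y in at_left x. ?F y \<le> u"
      by (rule eventually_at_leftI[of "x - 1"]) (auto intro: below)
  qed simp
  have Fx_ge: "u \<le> ?F x"
  proof (rule tendsto_lowerbound)
    show "(?F \<longlongrightarrow> ?F x) (at_right x)" using cont[of x] by (simp add: isCont_def filterlim_at_split)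
    show "\<forall>\<^sub>F y in at_right x. u \<le> ?F y"
      by (rule eventually_at_rightI[of _ "x + 1"]) (auto intro: above less_imp_le)
  qed simp
  have "?F y \<le> u \<longleftrightarrow> y \<le> x" for y
  proof
    assume "?F y \<le> u" then show "y \<le> x" using up unfolding S_def by auto
  next
    assume "y \<le> x" then show "?F y \<le> u"
      using Fx_le cdf_nondecreasing[of y x] by linarith
  qed
  moreover have "?F x = u" using Fx_le Fx_ge by linarith
  ultimately show ?thesis by blast
qed

lemma small_zero: "(\<And>\<epsilon>. 0 < \<epsilon> \<Longrightarrow> \<epsilon> < 1 \<Longrightarrow> (a::real) \<le> \<epsilon>) \<Longrightarrow> 0 \<le> a \<Longrightarrow> a = 0"
proof (rule ccontr)
  assume H: "\<And>\<epsilon>. 0 < \<epsilon> \<Longrightarrow> \<epsilon> < 1 \<Longrightarrow> a \<le> \<epsilon>" "0 \<le> a" "a \<noteq> 0"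
  then have "a \<le> min (a/2) (1/2)" by (intro H(1)) auto
  then have "a \<le> a/2" by simp
  then show False using H(2,3) by simp
qed

lemma uniform_from_atomless:
  fixes V :: "'w \<Rightarrow> real"
  assumes pM: "prob_space M" and V: "V \<in> borel_measurable M"
    and atom: "\<And>v. measure M (V -` {v} \<inter> space M) = 0"
  shows "\<exists>U. U \<in> borel_measurable M \<and> (\<forall>\<omega>\<in>space M. 0 < U \<omega> \<and> U \<omega> < 1)
     \<and> (\<forall>v. 0 \<le> v \<longrightarrow> v \<le> 1 \<longrightarrow> measure M {\<omega>\<in>space M. U \<omega> \<le> v} = v)"
proof -
  interpret M: prob_space M by (rule pM)
  define \<kappa> where "\<kappa> = distr M borel V"
  have rd: "real_distribution \<kappa>" unfolding \<kappa>_def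
    by (auto intro!: real_distribution.intro M.prob_space_distr V simp: real_distribution_axioms_def)
  interpret K: real_distribution \<kappa> by (rule rd)
  have cdfK: "cdf \<kappa> x = measure M {\<omega>\<in>space M. V \<omega> \<le> x}" for x
    unfolding cdf_def \<kappa>_def using V by (subst measure_distr) (auto intro!: arg_cong[where f="measure M"])
  have cont: "isCont (cdf \<kappa>) x" for x
    unfolding K.isCont_cdf unfolding \<kappa>_def using V atom[of x] by (subst measure_distr) auto
  define U0 where "U0 \<omega> = cdf \<kappa> (V \<omega>)" for \<omega>
  have U0m[measurable]: "U0 \<in> borel_measurable M" unfolding U0_def
    using V by (intro measurable_compose[OF V] borel_measurable_mono) (auto simp: mono_def K.cdf_nondecreasing)
  have U0u: "measure M {\<omega>\<in>space M. U0 \<omega> \<le> u} = u" if u01: "0 < u" "u < 1" for u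
  proof -
    obtain x where x: "\<And>y. cdf \<kappa> y \<le> u \<longleftrightarrow> y \<le> x" "cdf \<kappa> x = u"
      using cont_cdf_level[OF rd cont u01] by blast
    have "{\<omega>\<in>space M. U0 \<omega> \<le> u} = {\<omega>\<in>space M. V \<omega> \<le> x}" unfolding U0_def using x(1) by auto
    then show ?thesis using cdfK[of x] x(2) by simp
  qed
  have U0meas: "{\<omega>\<in>space M. P (U0 \<omega>)} \<in> sets M" if "Measurable.pred borel P" for P
    using U0m that by measurable
  have z0: "measure M {\<omega>\<in>space M. U0 \<omega> \<le> 0} = 0"
  proof (rule small_zero)
    fix \<epsilon> :: real assume "0 < \<epsilon>" "\<epsilon> < 1"
    have "measure M {\<omega>\<in>space M. U0 \<omega> \<le> 0} \<le> measure M {\<omega>\<in>space M. U0 \<omega> \<le> \<epsilon>}"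
      using \<open>0 < \<epsilon>\<close> by (intro M.finite_measure_mono U0meas) auto
    then show "measure M {\<omega>\<in>space M. U0 \<omega> \<le> 0} \<le> \<epsilon>" using U0u[OF \<open>0 < \<epsilon>\<close> \<open>\<epsilon> < 1\<close>] by simp
  qed simp
  have z1: "measure M {\<omega>\<in>space M. 1 \<le> U0 \<omega>} = 0"
  proof (rule small_zero)
    fix \<epsilon> :: real assume e: "0 < \<epsilon>" "\<epsilon> < 1"
    have "measure M {\<omega>\<in>space M. 1 \<le> U0 \<omega>} \<le> measure M (space M - {\<omega>\<in>space M. U0 \<omega> \<le> 1 - \<epsilon>})"
      using e by (intro M.finite_measure_mono sets.Diff sets.top U0meas) auto
    also have "\<dots> = 1 - (1 - \<epsilon>)"
      using e by (subst M.prob_compl) (auto intro: U0meas simp: U0u)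
    finally show "measure M {\<omega>\<in>space M. 1 \<le> U0 \<omega>} \<le> \<epsilon>" by simp
  qed simp
  define U where "U \<omega> = (if 0 < U0 \<omega> \<and> U0 \<omega> < 1 then U0 \<omega> else 1/2)" for \<omega>
  have Um: "U \<in> borel_measurable M" unfolding U_def using U0m by measurable
  have Ur: "\<forall>\<omega>\<in>space M. 0 < U \<omega> \<and> U \<omega> < 1" unfolding U_def by auto
  have bad: "measure M {\<omega>\<in>space M. \<not> (0 < U0 \<omega> \<and> U0 \<omega> < 1)} = 0"
  proof -
    have "measure M {\<omega>\<in>space M. \<not> (0 < U0 \<omega> \<and> U0 \<omega> < 1)}
        \<le> measure M {\<omega>\<in>space M. U0 \<omega> \<le> 0} + measure M {\<omega>\<in>space M. 1 \<le> U0 \<omega>}"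
    proof (rule order_trans[OF _ measure_Un_le])
      show "{\<omega>\<in>space M. U0 \<omega> \<le> 0} \<in> sets M" "{\<omega>\<in>space M. 1 \<le> U0 \<omega>} \<in> sets M"
        by (rule U0meas, measurable)+
      then show "measure M {\<omega>\<in>space M. \<not> (0 < U0 \<omega> \<and> U0 \<omega> < 1)}
        \<le> measure M ({\<omega>\<in>space M. U0 \<omega> \<le> 0} \<union> {\<omega>\<in>space M. 1 \<le> U0 \<omega>})"
        by (intro M.finite_measure_mono) auto
    qed
    then show ?thesis using z0 z1 by (simp add: measure_nonneg antisym)
  qed
  have Uv: "measure M {\<omega>\<in>space M. U \<omega> \<le> v} = v" if v01: "0 \<le> v" "v \<le> 1" for v
  proof -
    consider "v = 0" | "v = 1" | "0 < v \<and> v < 1" using v01 by linarith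
    then show ?thesis
    proof cases
      case 1
      then have eq: "{\<omega>\<in>space M. U \<omega> \<le> v} = {}" using Ur by force
      show ?thesis unfolding eq using 1 by simp
    next
      case 2
      then have eq: "{\<omega>\<in>space M. U \<omega> \<le> v} = space M" using Ur by force
      show ?thesis unfolding eq using 2 M.prob_space by simp
    next
      case 3
      let ?B = "{\<omega>\<in>space M. \<not> (0 < U0 \<omega> \<and> U0 \<omega> < 1)}"
      have Bs: "?B \<in> sets M" by (rule U0meas) measurable
      have Bn: "?B \<in> null_sets M" using bad Bs by (simp add: M.emeasure_eq_measure null_sets_def)
      have "{\<omega>\<in>space M. U \<omega> \<le> v} - ?B = {\<omega>\<in>space M. U0 \<omega> \<le> v} - ?B" unfolding U_def by auto
      moreover have "measure M ({\<omega>\<in>space M. U \<omega> \<le> v} - ?B) = measure M {\<omega>\<in>space M. U \<omega> \<le> v}"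
        using Bn Um by (intro measure_Diff_null_set) measurable
      moreover have "measure M ({\<omega>\<in>space M. U0 \<omega> \<le> v} - ?B) = measure M {\<omega>\<in>space M. U0 \<omega> \<le> v}"
        using Bn by (intro measure_Diff_null_set) measurable
      ultimately show ?thesis using U0u 3 by simp
    qed
  qed
  show ?thesis using Um Ur Uv by blast
qed


lemma law_exists:
  fixes M :: "'w measure" and T :: "'a topology"
  assumes pM: "prob_space M" and na: "nonatomic M" and sb: "standard_borel M"
    and PT: "Polish_space T" and mu: "\<mu> \<in> prob_measures T"
  shows "\<exists>X. X \<in> M \<rightarrow>\<^sub>M borel_of T \<and> distr M (borel_of T) X = \<mu>"
proof -
  interpret M: prob_space M by (rule pM)
  from mu have pmu: "prob_space \<mu>" and smu: "sets \<mu> = sets (borel_of T)"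
    unfolding prob_measures_def by auto
  have spmu: "space \<mu> = topspace T" using sets_eq_imp_space_eq[OF smu] by simp
  have neT: "topspace T \<noteq> {}" using prob_space.not_empty[OF pmu] spmu by simp
  obtain \<phi>E \<psi>E where \<phi>E: "\<phi>E \<in> borel_of T \<rightarrow>\<^sub>M (borel :: real measure)"
      and \<psi>E: "\<psi>E \<in> (borel :: real measure) \<rightarrow>\<^sub>M borel_of T" and inv: "\<forall>x\<in>topspace T. \<psi>E (\<phi>E x) = x"
    using polish_encode[OF PT neT] by blast
  from sb obtain TM where PTM: "Polish_space TM" "topspace TM = space M" "sets M = sets (borel_of TM)"
    unfolding standard_borel_def by blast
  have neM: "topspace TM \<noteq> {}" using M.not_empty PTM(2) by simp
  obtain V \<psi>M where V0: "V \<in> borel_of TM \<rightarrow>\<^sub>M (borel :: real measure)"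
      and invM: "\<forall>x\<in>topspace TM. \<psi>M (V x) = x"
    using polish_encode[OF PTM(1) neM] by blast
  have V: "V \<in> borel_measurable M"
    by (subst measurable_cong_sets[OF PTM(3) refl]) (rule V0)
  have atom: "measure M (V -` {v} \<inter> space M) = 0" for v
  proof (rule ccontr)
    let ?A = "V -` {v} \<inter> space M"
    assume "measure M ?A \<noteq> 0"
    then have pos: "measure M ?A > 0" using measure_nonneg[of M ?A] by linarith
    have As: "?A \<in> sets M" using V by measurable
    from na pos As obtain B where B: "B \<in> sets M" "B \<subseteq> ?A" "0 < measure M B" "measure M B < measure M ?A"
      unfolding nonatomic_def by blast
    then have "B \<noteq> {}" by auto
    then obtain b where b: "b \<in> B" by blast
    have "?A \<subseteq> B"
    proof
      fix a assume a: "a \<in> ?A"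
      have bA: "b \<in> ?A" using b B(2) by blast
      have "a = \<psi>M (V a)" using invM a PTM(2) by auto
      also have "\<dots> = \<psi>M (V b)" using a bA by simp
      also have "\<dots> = b" using invM bA PTM(2) by auto
      finally show "a \<in> B" using b by simp
    qed
    then have "B = ?A" using B(2) by blast
    then show False using B(4) by simp
  qed
  obtain U where Um: "U \<in> borel_measurable M" and Ur: "\<forall>\<omega>\<in>space M. 0 < U \<omega> \<and> U \<omega> < 1"
      and Uv: "\<forall>v. 0 \<le> v \<longrightarrow> v \<le> 1 \<longrightarrow> measure M {\<omega>\<in>space M. U \<omega> \<le> v} = v"
    using uniform_from_atomless[OF pM V atom] by blast
  define lam where "lam = distr \<mu> borel \<phi>E"
  have \<phi>Em: "\<phi>E \<in> \<mu> \<rightarrow>\<^sub>M borel" by (subst measurable_cong_sets[OF smu refl]) (rule \<phi>E)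
  have rdl: "real_distribution lam" unfolding lam_def
    by (auto intro!: real_distribution.intro prob_space.prob_space_distr[OF pmu \<phi>Em] simp: real_distribution_axioms_def)
  interpret L: cdf_distribution lam by (simp add: cdf_distribution_def rdl)
  define Y where "Y \<omega> = Inf {x. U \<omega> \<le> cdf lam x}" for \<omega>
  have Ur': "U \<in> M \<rightarrow>\<^sub>M restrict_space borel {0<..<1}"
    by (rule measurable_restrict_space2) (use Ur Um in auto)
  have Ym: "Y \<in> borel_measurable M" unfolding Y_def
    using Ur' L.measurable_CI by (rule measurable_compose)
  have cdfY: "cdf (distr M borel Y) x = cdf lam x" for x
  proof -
    have "cdf (distr M borel Y) x = measure M (Y -` {..x} \<inter> space M)"
      unfolding cdf_def using Ym by (simp add: measure_distr)
    also have "Y -` {..x} \<inter> space M = {\<omega>\<in>space M. U \<omega> \<le> cdf lam x}"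
    proof -
      have "Y \<omega> \<le> x \<longleftrightarrow> U \<omega> \<le> cdf lam x" if "\<omega> \<in> space M" for \<omega>
        using L.pseudoinverse[of "U \<omega>" x] Ur that unfolding Y_def by simp
      then show ?thesis by blast
    qed
    also have "measure M \<dots> = cdf lam x"
      using Uv L.cdf_nonneg[of x] L.cdf_bounded_prob[of x] by simp
    finally show ?thesis .
  qed
  have rdY: "real_distribution (distr M borel Y)"
    by (auto intro!: real_distribution.intro M.prob_space_distr Ym simp: real_distribution_axioms_def)
  have Ylaw: "distr M borel Y = lam" by (rule cdf_unique[OF rdY rdl]) (rule ext, rule cdfY)
  define X where "X \<omega> = \<psi>E (Y \<omega>)" for \<omega>
  have Xm: "X \<in> M \<rightarrow>\<^sub>M borel_of T" unfolding X_def using Ym \<psi>E by (rule measurable_compose)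
  have "distr M (borel_of T) X = distr (distr M borel Y) (borel_of T) \<psi>E"
    unfolding X_def by (simp add: distr_distr[OF \<psi>E Ym] comp_def)
  also have "\<dots> = distr \<mu> (borel_of T) (\<lambda>x. \<psi>E (\<phi>E x))"
    unfolding Ylaw lam_def by (simp add: distr_distr[OF \<psi>E \<phi>Em] comp_def)
  also have "\<dots> = distr \<mu> (borel_of T) (\<lambda>x. x)"
    by (rule distr_cong) (auto simp: spmu inv)
  also have "\<dots> = \<mu>" by (rule distr_id2) (simp add: smu)
  finally show ?thesis using Xm by blast
qed

lemma subgrad_key:
  fixes g :: "('a \<Rightarrow> real) \<Rightarrow> real" and L :: "('a \<Rightarrow> real) \<Rightarrow> real"
  assumes conv: "\<And>u v t. 0 \<le> t \<Longrightarrow> t \<le> 1 \<Longrightarrow> g (\<lambda>x. t * u x + (1 - t) * v x) \<le> t * g u + (1 - t) * g v"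
    and Lsub: "\<And>h. (\<forall>x. x \<notin> A \<longrightarrow> h x = 0) \<Longrightarrow> L h \<le> g h"
    and Llin: "\<And>h1 h2 a b. L (\<lambda>x. a * h1 x + b * h2 x) = a * L h1 + b * L h2"
    and e: "e \<notin> A"
    and h1: "\<forall>x. x \<notin> A \<longrightarrow> h1 x = 0" and h2: "\<forall>x. x \<notin> A \<longrightarrow> h2 x = 0"
    and r: "r > 0" and s: "s > 0"
  shows "(L h1 - g (\<lambda>x. h1 x - r * (if x = e then 1 else 0))) / r
       \<le> (g (\<lambda>x. h2 x + s * (if x = e then 1 else 0)) - L h2) / s"
proof -
  define \<tau> where "\<tau> = s / (r + s)"
  have \<tau>: "0 \<le> \<tau>" "\<tau> \<le> 1" using r s unfolding \<tau>_def by auto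
  let ?u = "\<lambda>x. h1 x - r * (if x = e then 1 else 0)"
  let ?v = "\<lambda>x. h2 x + s * (if x = e then 1 else 0)"
  have w: "(\<lambda>x. \<tau> * ?u x + (1 - \<tau>) * ?v x) = (\<lambda>x. (s / (r+s)) * h1 x + (r / (r+s)) * h2 x)"
  proof (rule ext)
    fix x
    have "1 - \<tau> = r / (r + s)" using r s unfolding \<tau>_def by (simp add: field_simps)
    then show "\<tau> * ?u x + (1 - \<tau>) * ?v x = (s / (r+s)) * h1 x + (r / (r+s)) * h2 x"
      unfolding \<tau>_def using r s by (simp add: field_simps)
  qed
  have "(s / (r+s)) * L h1 + (r / (r+s)) * L h2 = L (\<lambda>x. (s / (r+s)) * h1 x + (r / (r+s)) * h2 x)"
    by (rule Llin[symmetric])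
  also have "\<dots> \<le> g (\<lambda>x. (s / (r+s)) * h1 x + (r / (r+s)) * h2 x)"
    by (rule Lsub) (use h1 h2 in auto)
  also have "\<dots> \<le> \<tau> * g ?u + (1 - \<tau>) * g ?v"
    using conv[OF \<tau>, of ?u ?v] w by simp
  finally have ineq: "(s / (r+s)) * L h1 + (r / (r+s)) * L h2 \<le> \<tau> * g ?u + (1 - \<tau>) * g ?v" .
  have "1 - \<tau> = r / (r + s)" using r s unfolding \<tau>_def by (simp add: field_simps)
  with ineq have ineq2: "(s/(r+s)) * L h1 + (r/(r+s)) * L h2 \<le> (s/(r+s)) * g ?u + (r/(r+s)) * g ?v"
    unfolding \<tau>_def by simp
  have rs: "r + s \<noteq> 0" using r s by simp
  have "(r+s) * ((s/(r+s)) * L h1 + (r/(r+s)) * L h2) \<le> (r+s) * ((s/(r+s)) * g ?u + (r/(r+s)) * g ?v)"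
    using r s ineq2 by (intro mult_left_mono) auto
  moreover have "(r+s) * (X/(r+s) * Y) = X * Y" for X Y using rs by simp
  ultimately have "s * L h1 + r * L h2 \<le> s * g ?u + r * g ?v"
    by (simp only: distrib_left)
  then show ?thesis using r s by (simp add: field_simps)
qed

lemma subgrad_ext:
  fixes g :: "('a \<Rightarrow> real) \<Rightarrow> real"
  assumes conv: "\<And>u v t. 0 \<le> t \<Longrightarrow> t \<le> 1 \<Longrightarrow> g (\<lambda>x. t * u x + (1 - t) * v x) \<le> t * g u + (1 - t) * g v"
    and g0: "g (\<lambda>x. 0) = 0"
    and fin: "finite A"
  shows "\<exists>w. \<forall>h. (\<forall>x. x \<notin> A \<longrightarrow> h x = 0) \<longrightarrow> (\<Sum>a\<in>A. w a * h a) \<le> g h"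
  using fin
proof (induction A rule: finite_induct)
  case empty
  show ?case
  proof (intro exI allI impI)
    fix h :: "'a \<Rightarrow> real" assume "\<forall>x. x \<notin> {} \<longrightarrow> h x = 0"
    then have "h = (\<lambda>x. 0)" by auto
    then show "(\<Sum>a\<in>{}. (\<lambda>_. 0) a * h a) \<le> g h" using g0 by simp
  qed
next
  case (insert e A)
  from insert.IH obtain w where lam: "\<And>h. (\<forall>x. x \<notin> A \<longrightarrow> h x = 0) \<Longrightarrow> (\<Sum>a\<in>A. w a * h a) \<le> g h"
    by blast
  define L where "L h = (\<Sum>a\<in>A. w a * h a)" for h :: "'a \<Rightarrow> real"
  have Llin: "L (\<lambda>x. a * h1 x + b * h2 x) = a * L h1 + b * L h2" for h1 h2 a b
    unfolding L_def by (simp add: sum.distrib sum_distrib_left algebra_simps)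
  have Lsub: "(\<forall>x. x \<notin> A \<longrightarrow> h x = 0) \<Longrightarrow> L h \<le> g h" for h
    unfolding L_def by (rule lam)
  let ?\<delta> = "\<lambda>x::'a. if x = e then 1 else (0::real)"
  define P where "P = {(L h - g (\<lambda>x. h x - r * ?\<delta> x)) / r | h r. (\<forall>x. x \<notin> A \<longrightarrow> h x = 0) \<and> r > 0}"
  have key: "p \<le> (g (\<lambda>x. h2 x + s * ?\<delta> x) - L h2) / s"
    if "p \<in> P" "\<forall>x. x \<notin> A \<longrightarrow> h2 x = 0" "s > 0" for p h2 s
  proof -
    from that(1) obtain h r where hr: "p = (L h - g (\<lambda>x. h x - r * ?\<delta> x)) / r"
      "\<forall>x. x \<notin> A \<longrightarrow> h x = 0" "r > 0"
      unfolding P_def by blast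
    show ?thesis unfolding hr(1)
      by (rule subgrad_key[where g=g and L=L, OF conv Lsub Llin insert(2) hr(2) that(2) hr(3) that(3)])
  qed
  have Pne: "P \<noteq> {}" unfolding P_def by (auto intro!: exI[of _ "\<lambda>x. 0"] exI[of _ 1])
  have Pbdd: "bdd_above P"
    using key[of _ "\<lambda>x. 0" 1] by (auto intro!: bdd_aboveI)
  define c where "c = Sup P"
  show ?case
  proof (intro exI allI impI)
    fix h :: "'a \<Rightarrow> real" assume hs: "\<forall>x. x \<notin> insert e A \<longrightarrow> h x = 0"
    define h' where "h' = h(e := 0)"
    have h's: "\<forall>x. x \<notin> A \<longrightarrow> h' x = 0" using hs unfolding h'_def by auto
    have Lh': "L h' = (\<Sum>a\<in>A. w a * h a)" unfolding L_def h'_def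
      using insert(2) by (intro sum.cong) auto
    have sum_eq: "(\<Sum>a\<in>insert e A. (w(e := c)) a * h a) = c * h e + L h'"
      using insert(1,2) Lh' by (simp add: sum.insert) (intro sum.cong, auto)
    have hdec: "h = (\<lambda>x. h' x + h e * ?\<delta> x)" unfolding h'_def by auto
    consider "h e > 0" | "h e < 0" | "h e = 0" by linarith
    then show "(\<Sum>a\<in>insert e A. (w(e := c)) a * h a) \<le> g h"
    proof cases
      case 1
      have "c \<le> (g (\<lambda>x. h' x + h e * ?\<delta> x) - L h') / h e"
        unfolding c_def by (rule cSup_least[OF Pne]) (rule key[OF _ h's 1])
      then have "c * h e + L h' \<le> g (\<lambda>x. h' x + h e * ?\<delta> x)"
        using 1 by (simp add: field_simps)
      then show ?thesis using sum_eq hdec by simp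
    next
      case 2
      have mem: "(L h' - g (\<lambda>x. h' x - (- h e) * ?\<delta> x)) / (- h e) \<in> P"
        unfolding P_def apply (rule CollectI)
        apply (rule exI[of _ h'], rule exI[of _ "- h e"]) using h's 2 by auto
      have "(L h' - g (\<lambda>x. h' x - (- h e) * ?\<delta> x)) / (- h e) \<le> c"
        unfolding c_def by (rule cSup_upper[OF mem Pbdd])
      then have "L h' - g (\<lambda>x. h' x - (- h e) * ?\<delta> x) \<le> c * (- h e)"
        using 2 by (simp add: field_simps)
      moreover have "(\<lambda>x. h' x - (- h e) * ?\<delta> x) = h" by (subst hdec) auto
      ultimately show ?thesis using sum_eq by (simp add: algebra_simps)
    next
      case 3
      have "h' = h" unfolding h'_def using 3 by auto
      then show ?thesis using sum_eq 3 Lsub[OF h's] by simp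
    qed
  qed
qed



lemma Linf_bounded: "g \<in> borel_measurable M \<Longrightarrow> (\<And>\<omega>. \<omega> \<in> space M \<Longrightarrow> \<bar>g \<omega>\<bar> \<le> C) \<Longrightarrow> g \<in> Linf M"
  unfolding Linf_def by (auto intro!: exI[of _ C] AE_I2)

lemma bbf_bound: "f \<in> bounded_borel_funs T \<Longrightarrow> \<exists>C. \<forall>x\<in>topspace T. \<bar>f x\<bar> \<le> C"
  unfolding bounded_borel_funs_def bounded_iff by (auto simp: real_norm_def)

lemma bbf_meas: "f \<in> bounded_borel_funs T \<Longrightarrow> f \<in> borel_measurable (borel_of T)"
  unfolding bounded_borel_funs_def by auto

lemma measurable_borel_of_space: "X \<in> M \<rightarrow>\<^sub>M borel_of T \<Longrightarrow> \<omega> \<in> space M \<Longrightarrow> X \<omega> \<in> topspace T"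
  using measurable_space[of X M "borel_of T" \<omega>] by simp

lemma Linf_comp:
  assumes X: "X \<in> M \<rightarrow>\<^sub>M borel_of T" and f: "f \<in> bounded_borel_funs T"
  shows "(\<lambda>\<omega>. f (X \<omega>)) \<in> Linf M"
proof -
  obtain C where C: "\<forall>x\<in>topspace T. \<bar>f x\<bar> \<le> C" using bbf_bound[OF f] by blast
  show ?thesis
  proof (rule Linf_bounded[of _ _ C])
    show "(\<lambda>\<omega>. f (X \<omega>)) \<in> borel_measurable M" using measurable_compose[OF X bbf_meas[OF f]] .
    fix \<omega> assume "\<omega> \<in> space M"
    then have "X \<omega> \<in> topspace T" by (rule measurable_borel_of_space[OF X])
    then show "\<bar>f (X \<omega>)\<bar> \<le> C" using C by blast
  qed
qed

context
  fixes M :: "'w measure" and \<rho> :: "('w \<Rightarrow> real) \<Rightarrow> real"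
  assumes pM: "prob_space M" and rm: "risk_measure M \<rho>" and li: "law_invariant M \<rho>"
begin

lemma rm_convex: "X \<in> Linf M \<Longrightarrow> Y \<in> Linf M \<Longrightarrow> 0 \<le> t \<Longrightarrow> t \<le> 1 \<Longrightarrow>
    \<rho> (\<lambda>\<omega>. t * X \<omega> + (1 - t) * Y \<omega>) \<le> t * \<rho> X + (1 - t) * \<rho> Y"
proof -
  assume a: "X \<in> Linf M" "Y \<in> Linf M" "0 \<le> t" "t \<le> 1"
  have "\<forall>X\<in>Linf M. \<forall>Y\<in>Linf M. \<forall>t\<in>{0..1::real}.
        \<rho> (\<lambda>\<omega>. t * X \<omega> + (1 - t) * Y \<omega>) \<le> t * \<rho> X + (1 - t) * \<rho> Y"
    using rm unfolding risk_measure_def by blast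
  moreover have "t \<in> {0..1}" using a by simp
  ultimately show ?thesis using a by blast
qed

lemma rm_mono: "X \<in> Linf M \<Longrightarrow> Y \<in> Linf M \<Longrightarrow> (AE \<omega> in M. X \<omega> \<le> Y \<omega>) \<Longrightarrow> \<rho> X \<le> \<rho> Y"
  using rm unfolding risk_measure_def by blast

lemma rm_cash: "X \<in> Linf M \<Longrightarrow> \<rho> (\<lambda>\<omega>. X \<omega> + c) = \<rho> X + c"
  using rm unfolding risk_measure_def by blast

lemma rm_AE_eq: "X \<in> Linf M \<Longrightarrow> Y \<in> Linf M \<Longrightarrow> (AE \<omega> in M. X \<omega> = Y \<omega>) \<Longrightarrow> \<rho> X = \<rho> Y"
proof (rule antisym)
  assume X: "X \<in> Linf M" and Y: "Y \<in> Linf M" and e: "AE \<omega> in M. X \<omega> = Y \<omega>"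
  show "\<rho> X \<le> \<rho> Y" by (rule rm_mono[OF X Y]) (use e in \<open>rule AE_mp, auto\<close>)
  show "\<rho> Y \<le> \<rho> X" by (rule rm_mono[OF Y X]) (use e in \<open>rule AE_mp, auto\<close>)
qed

lemma rho_mu_eq:
  assumes X: "X \<in> M \<rightarrow>\<^sub>M borel_of T" and law: "distr M (borel_of T) X = \<mu>"
    and f: "f \<in> bounded_borel_funs T"
  shows "rho_mu M \<rho> T \<mu> f = \<rho> (\<lambda>\<omega>. f (X \<omega>))"
proof -
  define X' where "X' = (SOME X. X \<in> M \<rightarrow>\<^sub>M borel_of T \<and> distr M (borel_of T) X = \<mu>)"
  have "X' \<in> M \<rightarrow>\<^sub>M borel_of T \<and> distr M (borel_of T) X' = \<mu>"
    unfolding X'_def by (rule someI[of _ X]) (use X law in auto)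
  then have X'm: "X' \<in> M \<rightarrow>\<^sub>M borel_of T" and X'l: "distr M (borel_of T) X' = \<mu>" by auto
  have fm: "f \<in> borel_measurable (borel_of T)" by (rule bbf_meas[OF f])
  have "\<rho> (\<lambda>\<omega>. f (X' \<omega>)) = \<rho> (\<lambda>\<omega>. f (X \<omega>))"
  proof (rule li[unfolded law_invariant_def, rule_format])
    show "(\<lambda>\<omega>. f (X' \<omega>)) \<in> Linf M" using Linf_comp X'm f by blast
    show "(\<lambda>\<omega>. f (X \<omega>)) \<in> Linf M" using Linf_comp X f by blast
    have "distr M borel (\<lambda>\<omega>. f (X' \<omega>)) = distr (distr M (borel_of T) X') borel f"
      by (subst distr_distr[OF fm X'm]) (simp add: comp_def)
    also have "\<dots> = distr (distr M (borel_of T) X) borel f" unfolding X'l law ..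
    also have "\<dots> = distr M borel (\<lambda>\<omega>. f (X \<omega>))"
      by (subst distr_distr[OF fm X]) (simp add: comp_def)
    finally show "distr M borel (\<lambda>\<omega>. f (X' \<omega>)) = distr M borel (\<lambda>\<omega>. f (X \<omega>))" .
  qed
  then show ?thesis unfolding rho_mu_def comp_def X'_def[symmetric] by simp
qed

lemma rho_tilde_eq:
  assumes Y: "Y \<in> Linf M" and law: "distr M borel Y = m"
  shows "rho_tilde M \<rho> m = \<rho> Y"
proof -
  let ?Y' = "SOME X. X \<in> Linf M \<and> distr M borel X = m"
  have Y': "?Y' \<in> Linf M \<and> distr M borel ?Y' = m" by (rule someI[of _ Y]) (use Y law in auto)
  then have "\<rho> ?Y' = \<rho> Y" using li Y law unfolding law_invariant_def by metis
  then show ?thesis unfolding rho_tilde_def .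
qed

lemma conc_imp_jconv:
  fixes T :: "'a topology"
  assumes conc: "\<forall>f\<in>bounded_borel_funs T. \<forall>\<mu>1\<in>prob_measures T. \<forall>\<mu>2\<in>prob_measures T. \<forall>t\<in>{0..1::real}.
               t * rho_mu M \<rho> T \<mu>1 f + (1 - t) * rho_mu M \<rho> T \<mu>2 f \<le> rho_mu M \<rho> T (mix_measure t \<mu>1 \<mu>2) f"
    and n1: "\<nu>1 \<in> prob_measures T" and n2: "\<nu>2 \<in> prob_measures T"
    and m1: "\<mu>1 \<in> prob_measures T" and m2: "\<mu>2 \<in> prob_measures T" and t: "t \<in> {0..1::real}"
  shows "divergence M \<rho> T (mix_measure t \<nu>1 \<nu>2) (mix_measure t \<mu>1 \<mu>2)
           \<le> ereal t * divergence M \<rho> T \<nu>1 \<mu>1 + ereal (1 - t) * divergence M \<rho> T \<nu>2 \<mu>2"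
  unfolding divergence_def[of M \<rho> T "mix_measure t \<nu>1 \<nu>2"]
proof (rule SUP_least)
  fix f assume f: "f \<in> bounded_borel_funs T"
  have t01: "0 \<le> t" "t \<le> 1" using t by auto
  have sn: "sets \<nu>2 = sets \<nu>1" "sets \<nu>1 = sets (borel_of T)" using n1 n2 unfolding prob_measures_def by auto
  have pn: "prob_space \<nu>1" "prob_space \<nu>2" using n1 n2 unfolding prob_measures_def by auto
  obtain C where C: "\<forall>x\<in>topspace T. \<bar>f x\<bar> \<le> C" using bbf_bound[OF f] by blast
  have fm: "f \<in> borel_measurable \<nu>1"
    using bbf_meas[OF f] measurable_cong_sets[OF sn(2) refl, of borel] by blast
  have sp: "space \<nu>1 = topspace T" using sets_eq_imp_space_eq[OF sn(2)] by simp
  have int: "integral\<^sup>L (mix_measure t \<nu>1 \<nu>2) f = t * integral\<^sup>L \<nu>1 f + (1 - t) * integral\<^sup>L \<nu>2 f"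
    by (rule integral_mix[OF t01 sn(1) pn fm, of C]) (use C sp in auto)
  have cc: "t * rho_mu M \<rho> T \<mu>1 f + (1 - t) * rho_mu M \<rho> T \<mu>2 f \<le> rho_mu M \<rho> T (mix_measure t \<mu>1 \<mu>2) f"
    using conc f m1 m2 t by blast
  define a1 where "a1 = integral\<^sup>L \<nu>1 f - rho_mu M \<rho> T \<mu>1 f"
  define a2 where "a2 = integral\<^sup>L \<nu>2 f - rho_mu M \<rho> T \<mu>2 f"
  have a1: "ereal a1 \<le> divergence M \<rho> T \<nu>1 \<mu>1" unfolding divergence_def a1_def using f by (rule SUP_upper)
  have a2: "ereal a2 \<le> divergence M \<rho> T \<nu>2 \<mu>2" unfolding divergence_def a2_def using f by (rule SUP_upper)
  have "ereal (integral\<^sup>L (mix_measure t \<nu>1 \<nu>2) f - rho_mu M \<rho> T (mix_measure t \<mu>1 \<mu>2) f) \<le> ereal (t * a1 + (1 - t) * a2)"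
    using int cc unfolding a1_def a2_def by (simp add: algebra_simps)
  also have "\<dots> = ereal t * ereal a1 + ereal (1 - t) * ereal a2" by simp
  also have "\<dots> \<le> ereal t * divergence M \<rho> T \<nu>1 \<mu>1 + ereal (1 - t) * divergence M \<rho> T \<nu>2 \<mu>2"
    using t01 a1 a2 by (intro add_mono ereal_mult_left_mono) auto
  finally show "ereal (integral\<^sup>L (mix_measure t \<nu>1 \<nu>2) f - rho_mu M \<rho> T (mix_measure t \<mu>1 \<mu>2) f)
      \<le> ereal t * divergence M \<rho> T \<nu>1 \<mu>1 + ereal (1 - t) * divergence M \<rho> T \<nu>2 \<mu>2" .
qed

end

definition clamp :: "real \<Rightarrow> real \<Rightarrow> real" where
  "clamp N x = max (- N) (min N x)"

lemma clamp_meas[measurable]: "clamp N \<in> borel_measurable borel"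
  unfolding clamp_def by measurable

lemma clamp_bbf: "0 \<le> N \<Longrightarrow> clamp N \<in> bounded_borel_funs euclidean"
  unfolding bounded_borel_funs_def borel_of_euclidean bounded_iff
  by (auto simp: clamp_def intro!: exI[of _ N])

lemma clamp_id: "\<bar>x\<bar> \<le> N \<Longrightarrow> clamp N x = x"
  unfolding clamp_def by auto

lemma csp_prob_measures: "m \<in> compact_supp_prob \<Longrightarrow> m \<in> prob_measures euclidean"
  unfolding compact_supp_prob_def prob_measures_def borel_of_euclidean by auto

lemma csp_bound:
  assumes "m \<in> compact_supp_prob"
  shows "\<exists>N\<ge>0. \<forall>N'\<ge>N. emeasure m (UNIV - {-N'..N'}) = 0"
proof -
  from assms obtain K where K: "compact K" "emeasure m (UNIV - K) = 0" and sm: "sets m = sets borel"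
    unfolding compact_supp_prob_def by blast
  from compact_imp_bounded[OF K(1)] obtain N where N: "\<forall>x\<in>K. \<bar>x\<bar> \<le> N"
    unfolding bounded_iff by (auto simp: real_norm_def)
  have "emeasure m (UNIV - {-N'..N'}) = 0" if "N' \<ge> max N 0" for N'
  proof -
    have "UNIV - {-N'..N'} \<subseteq> UNIV - K" using N that by force
    then have "emeasure m (UNIV - {-N'..N'}) \<le> emeasure m (UNIV - K)"
    proof (rule emeasure_mono)
      have "K \<in> sets borel" using compact_imp_closed[OF K(1)] by (rule borel_closed)
      then show "UNIV - K \<in> sets m" using sm by auto
    qed
    then show ?thesis using K(2) by simp
  qed
  then show ?thesis by (intro exI[of _ "max N 0"]) auto
qed

context
  fixes M :: "'w measure" and \<rho> :: "('w \<Rightarrow> real) \<Rightarrow> real"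
  assumes pM: "prob_space M" and na: "nonatomic M" and sb: "standard_borel M"
    and rm: "risk_measure M \<rho>" and li: "law_invariant M \<rho>"
begin

lemmas rme = rho_mu_eq[OF pM rm li]
lemmas rte = rho_tilde_eq[OF pM rm li]
lemmas lex = law_exists[OF pM na sb]

lemma rho_mu_tilde:
  fixes T :: "'a topology"
  assumes PT: "Polish_space T" and mu: "\<mu> \<in> prob_measures T" and f: "f \<in> bounded_borel_funs T"
  shows "rho_mu M \<rho> T \<mu> f = rho_tilde M \<rho> (distr \<mu> borel f) \<and> distr \<mu> borel f \<in> compact_supp_prob"
proof
  from mu have pmu: "prob_space \<mu>" and smu: "sets \<mu> = sets (borel_of T)"
    unfolding prob_measures_def by auto
  have spmu: "space \<mu> = topspace T" using sets_eq_imp_space_eq[OF smu] by simp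
  have fm: "f \<in> borel_measurable (borel_of T)" by (rule bbf_meas[OF f])
  have fmu: "f \<in> borel_measurable \<mu>" by (subst measurable_cong_sets[OF smu refl]) (rule fm)
  obtain X where X: "X \<in> M \<rightarrow>\<^sub>M borel_of T" and law: "distr M (borel_of T) X = \<mu>"
    using lex[OF PT mu] by blast
  have "rho_mu M \<rho> T \<mu> f = \<rho> (\<lambda>\<omega>. f (X \<omega>))" by (rule rme[OF X law f])
  also have "\<dots> = rho_tilde M \<rho> (distr \<mu> borel f)"
  proof (rule rte[symmetric])
    show "(\<lambda>\<omega>. f (X \<omega>)) \<in> Linf M" by (rule Linf_comp[OF X f])
    show "distr M borel (\<lambda>\<omega>. f (X \<omega>)) = distr \<mu> borel f"
      unfolding law[symmetric] by (subst distr_distr[OF fm X]) (simp add: comp_def)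
  qed
  finally show "rho_mu M \<rho> T \<mu> f = rho_tilde M \<rho> (distr \<mu> borel f)" .
  obtain C where C: "\<forall>x\<in>topspace T. \<bar>f x\<bar> \<le> C" using bbf_bound[OF f] by blast
  have "f -` (UNIV - {-C..C}) \<inter> space \<mu> = {}" using C spmu by force
  then have "emeasure (distr \<mu> borel f) (UNIV - {-C..C}) = 0"
    using fmu by (subst emeasure_distr) auto
  moreover have "prob_space (distr \<mu> borel f)" by (rule prob_space.prob_space_distr[OF pmu fmu])
  ultimately show "distr \<mu> borel f \<in> compact_supp_prob"
    unfolding compact_supp_prob_def by (auto intro!: exI[of _ "{-C..C}"])
qed

lemma conc3_imp_conc2:
  fixes T :: "'a topology"
  assumes C: "\<forall>m1\<in>compact_supp_prob. \<forall>m2\<in>compact_supp_prob. \<forall>t\<in>{0..1::real}.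
             t * rho_tilde M \<rho> m1 + (1 - t) * rho_tilde M \<rho> m2 \<le> rho_tilde M \<rho> (mix_measure t m1 m2)"
    and PT: "Polish_space T" and f: "f \<in> bounded_borel_funs T"
    and m1: "\<mu>1 \<in> prob_measures T" and m2: "\<mu>2 \<in> prob_measures T" and t: "t \<in> {0..1::real}"
  shows "t * rho_mu M \<rho> T \<mu>1 f + (1 - t) * rho_mu M \<rho> T \<mu>2 f \<le> rho_mu M \<rho> T (mix_measure t \<mu>1 \<mu>2) f"
proof -
  have t01: "0 \<le> t" "t \<le> 1" using t by auto
  have s: "sets \<mu>2 = sets \<mu>1" "sets \<mu>1 = sets (borel_of T)" using m1 m2 unfolding prob_measures_def by auto
  have p: "prob_space \<mu>1" "prob_space \<mu>2" using m1 m2 unfolding prob_measures_def by auto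
  have mm: "mix_measure t \<mu>1 \<mu>2 \<in> prob_measures T"
    unfolding prob_measures_def using prob_space_mix[OF t01 s(1) p] sets_mix[OF t01 s(1)] s(2) by auto
  have fm1: "f \<in> \<mu>1 \<rightarrow>\<^sub>M borel" by (subst measurable_cong_sets[OF s(2) refl]) (rule bbf_meas[OF f])
  have dm: "distr (mix_measure t \<mu>1 \<mu>2) borel f = mix_measure t (distr \<mu>1 borel f) (distr \<mu>2 borel f)"
    by (rule distr_mix[OF t01 s(1) fm1])
  note r1 = rho_mu_tilde[OF PT m1 f] and r2 = rho_mu_tilde[OF PT m2 f] and r3 = rho_mu_tilde[OF PT mm f]
  show ?thesis using C r1 r2 r3 t unfolding dm by auto
qed

lemma csp_rho:
  assumes m: "m \<in> compact_supp_prob" and N: "0 \<le> N" and z: "emeasure m (UNIV - {-N..N}) = 0"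
  shows "rho_mu M \<rho> euclidean m (clamp N) = rho_tilde M \<rho> m"
proof -
  have pm: "m \<in> prob_measures euclidean" by (rule csp_prob_measures[OF m])
  have sm: "sets m = sets borel" using m unfolding compact_supp_prob_def by auto
  obtain X where X: "X \<in> M \<rightarrow>\<^sub>M borel_of euclidean" and law: "distr M (borel_of euclidean) X = m"
    using lex[OF Polish_space_euclidean_real pm] by blast
  have Xb: "X \<in> borel_measurable M" using X by (simp add: borel_of_euclidean)
  have "rho_mu M \<rho> euclidean m (clamp N) = \<rho> (\<lambda>\<omega>. clamp N (X \<omega>))" by (rule rme[OF X law clamp_bbf[OF N]])
  also have "\<dots> = rho_tilde M \<rho> m"
  proof (rule rte[symmetric])
    show "(\<lambda>\<omega>. clamp N (X \<omega>)) \<in> Linf M" by (rule Linf_comp[OF X clamp_bbf[OF N]])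
    have "distr M borel (\<lambda>\<omega>. clamp N (X \<omega>)) = distr m borel (clamp N)"
    proof -
      have l: "distr M borel X = m" using law by (simp add: borel_of_euclidean)
      show ?thesis unfolding l[symmetric] by (subst distr_distr[OF clamp_meas Xb]) (simp add: comp_def)
    qed
    also have "\<dots> = distr m borel (\<lambda>x. x)"
    proof (rule distr_cong_AE)
      have "UNIV - {-N..N} \<in> null_sets m" using z sm by (auto simp: null_sets_def)
      then show "AE x in m. clamp N x = x"
        by (rule AE_I') (auto intro!: clamp_id)
      show "clamp N \<in> borel_measurable m" "(\<lambda>x. x) \<in> borel_measurable m"
        by (simp_all add: measurable_cong_sets[OF sm refl])
    qed (auto simp: sm)
    also have "\<dots> = m" by (rule distr_id2) (simp add: sm)
    finally show "distr M borel (\<lambda>\<omega>. clamp N (X \<omega>)) = m" .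
  qed
  finally show ?thesis .
qed

lemma conc2_imp_conc3:
  assumes C: "\<forall>f\<in>bounded_borel_funs (euclidean :: real topology). \<forall>\<mu>1\<in>prob_measures euclidean. \<forall>\<mu>2\<in>prob_measures euclidean. \<forall>t\<in>{0..1::real}.
               t * rho_mu M \<rho> euclidean \<mu>1 f + (1 - t) * rho_mu M \<rho> euclidean \<mu>2 f \<le> rho_mu M \<rho> euclidean (mix_measure t \<mu>1 \<mu>2) f"
    and m1: "m1 \<in> compact_supp_prob" and m2: "m2 \<in> compact_supp_prob" and t: "t \<in> {0..1::real}"
  shows "t * rho_tilde M \<rho> m1 + (1 - t) * rho_tilde M \<rho> m2 \<le> rho_tilde M \<rho> (mix_measure t m1 m2)"
proof -
  have t01: "0 \<le> t" "t \<le> 1" using t by auto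
  obtain N1 where N1: "N1 \<ge> 0" "\<forall>N'\<ge>N1. emeasure m1 (UNIV - {-N'..N'}) = 0" using csp_bound[OF m1] by blast
  obtain N2 where N2: "N2 \<ge> 0" "\<forall>N'\<ge>N2. emeasure m2 (UNIV - {-N'..N'}) = 0" using csp_bound[OF m2] by blast
  define N where "N = max N1 N2"
  have N: "0 \<le> N" unfolding N_def using N1 by simp
  have z1: "emeasure m1 (UNIV - {-N..N}) = 0" using N1 unfolding N_def by simp
  have z2: "emeasure m2 (UNIV - {-N..N}) = 0" using N2 unfolding N_def by simp
  have s: "sets m2 = sets m1" "sets m1 = sets borel" using m1 m2 unfolding compact_supp_prob_def by auto
  have p: "prob_space m1" "prob_space m2" using m1 m2 unfolding compact_supp_prob_def by auto
  have zm: "emeasure (mix_measure t m1 m2) (UNIV - {-N..N}) = 0"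
    by (simp add: emeasure_mix[OF t01 s(1)] z1 z2)
  have mm: "mix_measure t m1 m2 \<in> compact_supp_prob"
    unfolding compact_supp_prob_def using prob_space_mix[OF t01 s(1) p] sets_mix[OF t01 s(1)] s(2) zm
    by (auto intro!: exI[of _ "{-N..N}"])
  have "t * rho_tilde M \<rho> m1 + (1 - t) * rho_tilde M \<rho> m2
      = t * rho_mu M \<rho> euclidean m1 (clamp N) + (1 - t) * rho_mu M \<rho> euclidean m2 (clamp N)"
    using csp_rho[OF m1 N z1] csp_rho[OF m2 N z2] by simp
  also have "\<dots> \<le> rho_mu M \<rho> euclidean (mix_measure t m1 m2) (clamp N)"
    using C clamp_bbf[OF N] csp_prob_measures[OF m1] csp_prob_measures[OF m2] t by blast
  also have "\<dots> = rho_tilde M \<rho> (mix_measure t m1 m2)" by (rule csp_rho[OF mm N zm])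
  finally show ?thesis .
qed

end

lemma Linf_add_const: "X \<in> Linf M \<Longrightarrow> (\<lambda>\<omega>. X \<omega> + c) \<in> Linf M"
  unfolding Linf_def
proof (elim CollectE conjE exE, intro CollectI conjI)
  fix C assume "X \<in> borel_measurable M" "AE \<omega> in M. \<bar>X \<omega>\<bar> \<le> C"
  then show "(\<lambda>\<omega>. X \<omega> + c) \<in> borel_measurable M" "\<exists>C. AE \<omega> in M. \<bar>X \<omega> + c\<bar> \<le> C"
    by (auto intro!: exI[of _ "C + \<bar>c\<bar>"] elim!: eventually_mono)
qed

definition Rs :: "real set \<Rightarrow> (real \<Rightarrow> real) \<Rightarrow> real \<Rightarrow> real" where
  "Rs S v = (\<lambda>x. if x \<in> S then v x else 0)"

lemma Rs_sum: "finite S \<Longrightarrow> Rs S v = (\<lambda>x. \<Sum>s\<in>S. v s * indicator {s} x)"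
proof (rule ext)
  fix x assume S: "finite S"
  have "(\<Sum>s\<in>S. v s * indicator {s} x) = (\<Sum>s\<in>S. if s = x then v s else 0)"
    by (rule sum.cong) (auto simp: indicator_def)
  also have "\<dots> = Rs S v x" using S unfolding Rs_def by (simp add: sum.delta')
  finally show "Rs S v x = (\<Sum>s\<in>S. v s * indicator {s} x)" ..
qed

lemma Rs_bbf: "finite S \<Longrightarrow> Rs S v \<in> bounded_borel_funs euclidean"
proof -
  assume S: "finite S"
  have m: "Rs S v \<in> borel_measurable borel" unfolding Rs_sum[OF S] by measurable
  have "\<bar>Rs S v x\<bar> \<le> (\<Sum>s\<in>S. \<bar>v s\<bar>)" for x
    unfolding Rs_def using S by (auto intro: member_le_sum[where f="\<lambda>s. \<bar>v s\<bar>"])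
  then show ?thesis using m unfolding bounded_borel_funs_def borel_of_euclidean bounded_iff
    by (auto simp: real_norm_def)
qed

definition disc :: "nat \<Rightarrow> real \<Rightarrow> real \<Rightarrow> real" where
  "disc n N x = real_of_int \<lfloor>real n * clamp N x\<rfloor> / real n"

lemma disc_meas[measurable]: "disc n N \<in> borel_measurable borel"
  unfolding disc_def by measurable

lemma clamp_range: "0 \<le> N \<Longrightarrow> - N \<le> clamp N x \<and> clamp N x \<le> N"
  unfolding clamp_def by auto

lemma floor_div_bounds:
  assumes n: "real n > 0"
  shows "real_of_int \<lfloor>real n * y\<rfloor> / real n \<le> y" "y - 1 / real n < real_of_int \<lfloor>real n * y\<rfloor> / real n"
proof -
  have f: "real_of_int \<lfloor>real n * y\<rfloor> \<le> real n * y" "real n * y < real_of_int \<lfloor>real n * y\<rfloor> + 1" by linarith+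
  show "real_of_int \<lfloor>real n * y\<rfloor> / real n \<le> y" using f(1) n by (simp add: pos_divide_le_eq mult.commute)
  have "(real n * y - 1) / real n < real_of_int \<lfloor>real n * y\<rfloor> / real n"
    by (rule divide_strict_right_mono) (use f n in auto)
  moreover have "(real n * y - 1) / real n = y - 1 / real n" using n by (simp add: field_simps)
  ultimately show "y - 1 / real n < real_of_int \<lfloor>real n * y\<rfloor> / real n" by simp
qed

lemma disc_le: assumes n: "n \<ge> 1" and x: "\<bar>x\<bar> \<le> N" shows "disc n N x \<le> x \<and> x - 1 / real n \<le> disc n N x"
proof -
  have c: "clamp N x = x" by (rule clamp_id[OF x])
  have np: "real n > 0" using n by simp
  show ?thesis unfolding disc_def c using floor_div_bounds[OF np, of x] by simp
qed

lemma disc_bound: assumes n: "n \<ge> 1" and N: "0 \<le> N" shows "\<bar>disc n N x\<bar> \<le> N + 1"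
proof -
  let ?c = "clamp N x"
  have c: "- N \<le> ?c" "?c \<le> N" using clamp_range[OF N] by auto
  have np: "real n > 0" "real n \<ge> 1" using n by auto
  have "disc n N x \<le> ?c" "?c - 1 / real n < disc n N x"
    unfolding disc_def using floor_div_bounds[OF np(1), of ?c] by auto
  moreover have "1 / real n \<le> 1" using np by simp
  ultimately show ?thesis using c N by (simp add: abs_le_iff)
qed

lemma disc_range: assumes n: "n \<ge> 1" and N: "0 \<le> N"
  shows "disc n N x \<in> (\<lambda>k. real_of_int k / real n) ` {\<lfloor>- (real n * N)\<rfloor>..\<lfloor>real n * N\<rfloor>}"
proof -
  let ?c = "clamp N x"
  have c: "- N \<le> ?c" "?c \<le> N" using clamp_range[OF N] by auto
  have "real n * (- N) \<le> real n * ?c" "real n * ?c \<le> real n * N"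
    using mult_left_mono[OF c(1), of "real n"] mult_left_mono[OF c(2), of "real n"] by auto
  then have "- (real n * N) \<le> real n * ?c" "real n * ?c \<le> real n * N" by simp_all
  then have "\<lfloor>- (real n * N)\<rfloor> \<le> \<lfloor>real n * ?c\<rfloor>" "\<lfloor>real n * ?c\<rfloor> \<le> \<lfloor>real n * N\<rfloor>" by (auto intro: floor_mono)
  then show ?thesis unfolding disc_def by auto
qed

lemma clamp_disc: "n \<ge> 1 \<Longrightarrow> 0 \<le> N \<Longrightarrow> clamp (N + 1) (disc n N x) = disc n N x"
  by (rule clamp_id) (rule disc_bound)

lemma eps_nat: assumes "\<And>n::nat. n \<ge> 1 \<Longrightarrow> a - 1 / real n \<le> (b::real)" shows "a \<le> b"
proof (rule ccontr)
  assume "\<not> a \<le> b"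
  then have d: "a - b > 0" by simp
  obtain n :: nat where n: "1 / (a - b) < real n" using reals_Archimedean2 by blast
  then have n1: "n \<ge> 1" using d by (cases n) (auto simp: field_simps)
  have "1 < (a - b) * real n" using n d by (simp add: field_simps)
  then have "1 / real n < a - b" using n1 by (simp add: field_simps)
  then show False using assms[OF n1] by simp
qed

context
  fixes M :: "'w measure" and \<rho> :: "('w \<Rightarrow> real) \<Rightarrow> real"
  assumes pM: "prob_space M" and na: "nonatomic M" and sb: "standard_borel M"
    and rm: "risk_measure M \<rho>" and li: "law_invariant M \<rho>"
begin

lemmas rme' = rho_mu_eq[OF pM rm li]
lemmas lex' = law_exists[OF pM na sb]
lemmas rconv = rm_convex[OF pM rm li]
lemmas rmono = rm_mono[OF pM rm li]
lemmas rcash = rm_cash[OF pM rm li]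
lemmas rAE = rm_AE_eq[OF pM rm li]

lemma attain:
  fixes m :: "real measure" and S :: "real set"
  assumes m: "m \<in> prob_measures euclidean" and S: "finite S" and z: "emeasure m (UNIV - S) = 0"
    and f: "f \<in> bounded_borel_funs euclidean"
  shows "\<exists>\<nu>\<in>prob_measures euclidean.
     divergence M \<rho> euclidean \<nu> m = ereal (integral\<^sup>L \<nu> f - rho_mu M \<rho> euclidean m f)"
proof -
  interpret M: prob_space M by (rule pM)
  have sm: "sets m = sets borel" using m unfolding prob_measures_def borel_of_euclidean by auto
  obtain X0 where X0: "X0 \<in> M \<rightarrow>\<^sub>M borel_of euclidean" and law: "distr M (borel_of euclidean) X0 = m"
    using lex'[OF Polish_space_euclidean_real m] by blast
  have X0b: "X0 \<in> borel_measurable M" using X0 by (simp add: borel_of_euclidean)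
  have law': "distr M borel X0 = m" using law by (simp add: borel_of_euclidean)
  have Sc: "UNIV - S \<in> sets borel"
  proof -
    have "S \<in> sets borel" using finite_imp_closed[OF S] by (rule borel_closed)
    then show ?thesis by (rule sets.compl_sets[of _ borel, simplified])
  qed
  have "emeasure M (X0 -` (UNIV - S) \<inter> space M) = 0"
    using z Sc X0b unfolding law'[symmetric] by (subst (asm) emeasure_distr) auto
  then have nul: "X0 -` (UNIV - S) \<inter> space M \<in> null_sets M" using Sc X0b by (auto simp: null_sets_def)
  have AES: "AE \<omega> in M. X0 \<omega> \<in> S" by (rule AE_I'[OF nul]) auto
  define \<Phi> where "\<Phi> v = \<rho> (\<lambda>\<omega>. Rs S v (X0 \<omega>))" for v
  have RL: "(\<lambda>\<omega>. Rs S v (X0 \<omega>)) \<in> Linf M" for v by (rule Linf_comp[OF X0 Rs_bbf[OF S]])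
  have rmu: "rho_mu M \<rho> euclidean m g = \<Phi> g" if g: "g \<in> bounded_borel_funs euclidean" for g
  proof -
    have "rho_mu M \<rho> euclidean m g = \<rho> (\<lambda>\<omega>. g (X0 \<omega>))" by (rule rme'[OF X0 law g])
    also have "\<dots> = \<Phi> g" unfolding \<Phi>_def
      by (rule rAE[OF Linf_comp[OF X0 g] RL]) (use AES in \<open>eventually_elim, simp add: Rs_def\<close>)
    finally show ?thesis .
  qed
  have conv: "\<Phi> (\<lambda>x. t * u x + (1 - t) * v x) \<le> t * \<Phi> u + (1 - t) * \<Phi> v" if "0 \<le> t" "t \<le> 1" for t u v
  proof -
    have "(\<lambda>\<omega>. Rs S (\<lambda>x. t * u x + (1 - t) * v x) (X0 \<omega>)) = (\<lambda>\<omega>. t * Rs S u (X0 \<omega>) + (1 - t) * Rs S v (X0 \<omega>))"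
      by (auto simp: Rs_def)
    then show ?thesis unfolding \<Phi>_def using rconv[OF RL RL that] by simp
  qed
  have mono: "\<Phi> u \<le> \<Phi> v" if "\<forall>x\<in>S. u x \<le> v x" for u v
    unfolding \<Phi>_def by (rule rmono[OF RL RL]) (use that in \<open>auto simp: Rs_def\<close>)
  have cash: "\<Phi> (\<lambda>x. u x + c) = \<Phi> u + c" for u c
  proof -
    have "\<Phi> (\<lambda>x. u x + c) = \<rho> (\<lambda>\<omega>. Rs S u (X0 \<omega>) + c)" unfolding \<Phi>_def
      by (rule rAE[OF RL Linf_add_const[OF RL]]) (use AES in \<open>eventually_elim, simp add: Rs_def\<close>)
    also have "\<dots> = \<Phi> u + c" unfolding \<Phi>_def by (rule rcash[OF RL])
    finally show ?thesis .
  qed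
  have dep: "\<Phi> (\<lambda>x. f x + Rs S h x) = \<Phi> (\<lambda>x. f x + h x)" for h
  proof -
    have "Rs S (\<lambda>x. f x + Rs S h x) = Rs S (\<lambda>x. f x + h x)" by (auto simp: Rs_def)
    then show ?thesis unfolding \<Phi>_def by simp
  qed
  define g where "g h = \<Phi> (\<lambda>x. f x + h x) - \<Phi> f" for h
  have gconv: "g (\<lambda>x. t * u x + (1 - t) * v x) \<le> t * g u + (1 - t) * g v" if "0 \<le> t" "t \<le> 1" for u v t
  proof -
    have "(\<lambda>x. f x + (t * u x + (1 - t) * v x)) = (\<lambda>x. t * (f x + u x) + (1 - t) * (f x + v x))"
      by (auto simp: algebra_simps)
    then have "\<Phi> (\<lambda>x. f x + (t * u x + (1 - t) * v x)) \<le> t * \<Phi> (\<lambda>x. f x + u x) + (1 - t) * \<Phi> (\<lambda>x. f x + v x)"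
      using conv[OF that] by simp
    then show ?thesis unfolding g_def by (simp add: algebra_simps)
  qed
  have g0: "g (\<lambda>x. 0) = 0" unfolding g_def by simp
  obtain w where w: "\<And>h. (\<forall>x. x \<notin> S \<longrightarrow> h x = 0) \<Longrightarrow> (\<Sum>a\<in>S. w a * h a) \<le> g h"
    using subgrad_ext[of g S, OF gconv g0 S] by blast
  have sub: "(\<Sum>a\<in>S. w a * h a) \<le> \<Phi> (\<lambda>x. f x + h x) - \<Phi> f" for h
  proof -
    have "(\<Sum>a\<in>S. w a * h a) = (\<Sum>a\<in>S. w a * Rs S h a)" by (rule sum.cong) (auto simp: Rs_def)
    also have "\<dots> \<le> g (Rs S h)" by (rule w) (auto simp: Rs_def)
    also have "\<dots> = \<Phi> (\<lambda>x. f x + h x) - \<Phi> f" unfolding g_def dep ..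
    finally show ?thesis .
  qed
  have wpos: "0 \<le> w s" if s: "s \<in> S" for s
  proof -
    have "(\<Sum>a\<in>S. w a * (- indicator {s} a)) = - w s"
      using S s by (simp add: indicator_def sum.delta' sum_negf)
    moreover have "\<Phi> (\<lambda>x. f x + - indicator {s} x) \<le> \<Phi> f" by (rule mono) (auto simp: indicator_def)
    ultimately show ?thesis using sub[of "\<lambda>x. - indicator {s} x"] by simp
  qed
  have wsum: "(\<Sum>a\<in>S. w a) = 1"
  proof -
    have "(\<Sum>a\<in>S. w a) \<le> 1" using sub[of "\<lambda>x. 1"] cash[of f 1] by simp
    moreover have "- (\<Sum>a\<in>S. w a) \<le> - 1" using sub[of "\<lambda>x. - 1"] cash[of f "- 1"] by (simp add: sum_negf)
    ultimately show ?thesis by simp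
  qed
  define F where "F x = (if x \<in> S then w x else 0)" for x
  have F0: "0 \<le> F x" for x unfolding F_def using wpos by auto
  have F1: "(\<integral>\<^sup>+ x. ennreal (F x) \<partial>count_space UNIV) = 1"
  proof -
    have "(\<integral>\<^sup>+ x. ennreal (F x) \<partial>count_space UNIV) = (\<Sum>x\<in>S. ennreal (F x))"
      by (rule nn_integral_count_space'[OF S]) (auto simp: F_def)
    also have "\<dots> = ennreal (\<Sum>x\<in>S. F x)" using F0 by (simp add: sum_ennreal)
    also have "(\<Sum>x\<in>S. F x) = 1" using wsum unfolding F_def by simp
    finally show ?thesis by simp
  qed
  define p where "p = embed_pmf F"
  have pmfp: "pmf p x = F x" for x unfolding p_def by (rule pmf_embed_pmf[OF F0 F1])
  have setp: "set_pmf p \<subseteq> S" unfolding p_def set_embed_pmf[OF F0 F1] F_def by auto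
  define \<nu> where "\<nu> = distr (measure_pmf p) borel (\<lambda>x. x)"
  have idm: "(\<lambda>x. x) \<in> measure_pmf p \<rightarrow>\<^sub>M (borel :: real measure)" by simp
  have \<nu>pm: "\<nu> \<in> prob_measures euclidean"
    unfolding prob_measures_def \<nu>_def borel_of_euclidean
    using measure_pmf.prob_space_distr[OF idm] by simp
  have intg: "integral\<^sup>L \<nu> h = (\<Sum>a\<in>S. w a * h a)" if h: "h \<in> bounded_borel_funs euclidean" for h
  proof -
    have hm: "h \<in> borel_measurable borel" using bbf_meas[OF h] by (simp add: borel_of_euclidean)
    have "integral\<^sup>L \<nu> h = measure_pmf.expectation p h" unfolding \<nu>_def by (simp add: integral_distr[OF idm hm])
    also have "\<dots> = (\<Sum>a\<in>S. h a * pmf p a)" by (rule integral_measure_pmf_real[OF S]) (use setp in auto)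
    also have "\<dots> = (\<Sum>a\<in>S. w a * h a)" by (rule sum.cong) (auto simp: pmfp F_def)
    finally show ?thesis .
  qed
  have "divergence M \<rho> euclidean \<nu> m = ereal ((\<Sum>a\<in>S. w a * f a) - \<Phi> f)"
    unfolding divergence_def
  proof (rule antisym)
    show "(SUP h\<in>bounded_borel_funs euclidean. ereal (integral\<^sup>L \<nu> h - rho_mu M \<rho> euclidean m h))
        \<le> ereal ((\<Sum>a\<in>S. w a * f a) - \<Phi> f)"
    proof (rule SUP_least)
      fix h :: "real \<Rightarrow> real" assume h: "h \<in> bounded_borel_funs euclidean"
      have "(\<Sum>a\<in>S. w a * (h a - f a)) \<le> \<Phi> (\<lambda>x. f x + (h x - f x)) - \<Phi> f" by (rule sub)
      then have "(\<Sum>a\<in>S. w a * h a) - \<Phi> h \<le> (\<Sum>a\<in>S. w a * f a) - \<Phi> f"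
        by (simp add: algebra_simps sum_subtractf)
      then show "ereal (integral\<^sup>L \<nu> h - rho_mu M \<rho> euclidean m h) \<le> ereal ((\<Sum>a\<in>S. w a * f a) - \<Phi> f)"
        using intg[OF h] rmu[OF h] by simp
    qed
    show "ereal ((\<Sum>a\<in>S. w a * f a) - \<Phi> f)
        \<le> (SUP h\<in>bounded_borel_funs euclidean. ereal (integral\<^sup>L \<nu> h - rho_mu M \<rho> euclidean m h))"
      by (rule SUP_upper2[OF f]) (simp add: intg[OF f] rmu[OF f])
  qed
  also have "\<dots> = ereal (integral\<^sup>L \<nu> f - rho_mu M \<rho> euclidean m f)" by (simp add: intg[OF f] rmu[OF f])
  finally show ?thesis using \<nu>pm by blast
qed


lemma finite_conc:
  fixes m1 m2 :: "real measure" and S :: "real set"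
  assumes J: "\<forall>\<nu>1\<in>prob_measures (euclidean :: real topology). \<forall>\<nu>2\<in>prob_measures euclidean.
             \<forall>\<mu>1\<in>prob_measures euclidean. \<forall>\<mu>2\<in>prob_measures euclidean. \<forall>t\<in>{0..1::real}.
               divergence M \<rho> euclidean (mix_measure t \<nu>1 \<nu>2) (mix_measure t \<mu>1 \<mu>2)
                 \<le> ereal t * divergence M \<rho> euclidean \<nu>1 \<mu>1
                   + ereal (1 - t) * divergence M \<rho> euclidean \<nu>2 \<mu>2"
    and m1: "m1 \<in> prob_measures euclidean" and m2: "m2 \<in> prob_measures euclidean"
    and S: "finite S" and z1: "emeasure m1 (UNIV - S) = 0" and z2: "emeasure m2 (UNIV - S) = 0"
    and f: "f \<in> bounded_borel_funs euclidean" and t: "t \<in> {0..1::real}"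
  shows "t * rho_mu M \<rho> euclidean m1 f + (1 - t) * rho_mu M \<rho> euclidean m2 f
      \<le> rho_mu M \<rho> euclidean (mix_measure t m1 m2) f"
proof -
  have t01: "0 \<le> t" "t \<le> 1" using t by auto
  obtain \<nu>1 where n1: "\<nu>1 \<in> prob_measures euclidean"
    and d1: "divergence M \<rho> euclidean \<nu>1 m1 = ereal (integral\<^sup>L \<nu>1 f - rho_mu M \<rho> euclidean m1 f)"
    using attain[OF m1 S z1 f] by blast
  obtain \<nu>2 where n2: "\<nu>2 \<in> prob_measures euclidean"
    and d2: "divergence M \<rho> euclidean \<nu>2 m2 = ereal (integral\<^sup>L \<nu>2 f - rho_mu M \<rho> euclidean m2 f)"
    using attain[OF m2 S z2 f] by blast
  have jc: "divergence M \<rho> euclidean (mix_measure t \<nu>1 \<nu>2) (mix_measure t m1 m2)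
      \<le> ereal t * divergence M \<rho> euclidean \<nu>1 m1 + ereal (1 - t) * divergence M \<rho> euclidean \<nu>2 m2"
    using J n1 n2 m1 m2 t by blast
  have low: "ereal (integral\<^sup>L (mix_measure t \<nu>1 \<nu>2) f - rho_mu M \<rho> euclidean (mix_measure t m1 m2) f)
      \<le> divergence M \<rho> euclidean (mix_measure t \<nu>1 \<nu>2) (mix_measure t m1 m2)"
    unfolding divergence_def using f by (rule SUP_upper)
  have sn: "sets \<nu>2 = sets \<nu>1" "sets \<nu>1 = sets (borel_of euclidean)" using n1 n2 unfolding prob_measures_def by auto
  have pn: "prob_space \<nu>1" "prob_space \<nu>2" using n1 n2 unfolding prob_measures_def by auto
  obtain C where C: "\<forall>x\<in>topspace euclidean. \<bar>f x\<bar> \<le> C" using bbf_bound[OF f] by blast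
  have fm: "f \<in> borel_measurable \<nu>1"
    using bbf_meas[OF f] measurable_cong_sets[OF sn(2) refl, of borel] by blast
  have int: "integral\<^sup>L (mix_measure t \<nu>1 \<nu>2) f = t * integral\<^sup>L \<nu>1 f + (1 - t) * integral\<^sup>L \<nu>2 f"
    by (rule integral_mix[OF t01 sn(1) pn fm, of C]) (use C in auto)
  have "ereal (integral\<^sup>L (mix_measure t \<nu>1 \<nu>2) f - rho_mu M \<rho> euclidean (mix_measure t m1 m2) f)
     \<le> ereal (t * (integral\<^sup>L \<nu>1 f - rho_mu M \<rho> euclidean m1 f) + (1 - t) * (integral\<^sup>L \<nu>2 f - rho_mu M \<rho> euclidean m2 f))"
    using order_trans[OF low jc] unfolding d1 d2 by simp
  then show ?thesis unfolding int by (simp add: algebra_simps)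
qed

lemma law_AE_bound:
  fixes X :: "'w \<Rightarrow> real" and N :: real
  assumes X: "X \<in> borel_measurable M" and law: "distr M borel X = m" and z: "emeasure m (UNIV - {-N..N}) = 0"
  shows "AE \<omega> in M. \<bar>X \<omega>\<bar> \<le> N"
proof (rule AE_I')
  have Nb: "{-N..N} \<in> sets (borel::real measure)" by simp
  have Cb: "UNIV - {-N..N} \<in> sets (borel::real measure)" using sets.compl_sets[OF Nb] by simp
  have "emeasure M (X -` (UNIV - {-N..N}) \<inter> space M) = 0"
    using z X Cb unfolding law[symmetric] by (subst (asm) emeasure_distr) auto
  moreover have "X -` (UNIV - {-N..N}) \<inter> space M \<in> sets M"
    using Cb by (rule measurable_sets[OF X])
  ultimately show "X -` (UNIV - {-N..N}) \<inter> space M \<in> null_sets M" by (auto simp: null_sets_def)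
qed auto

lemma disc_rho:
  assumes X: "X \<in> borel_measurable M" and ae: "AE \<omega> in M. \<bar>X \<omega>\<bar> \<le> N" and n: "n \<ge> 1" and N: "0 \<le> N"
  shows "X \<in> Linf M" "\<rho> X - 1 / real n \<le> \<rho> (\<lambda>\<omega>. disc n N (X \<omega>))" "\<rho> (\<lambda>\<omega>. disc n N (X \<omega>)) \<le> \<rho> X"
proof -
  show XL: "X \<in> Linf M" unfolding Linf_def using X ae by blast
  have DL: "(\<lambda>\<omega>. disc n N (X \<omega>)) \<in> Linf M"
    by (rule Linf_bounded[of _ _ "N + 1"]) (use X disc_bound[OF n N] in auto)
  show "\<rho> (\<lambda>\<omega>. disc n N (X \<omega>)) \<le> \<rho> X"
    by (rule rmono[OF DL XL]) (use ae in \<open>eventually_elim, use disc_le[OF n] in blast\<close>)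
  have "\<rho> X - 1 / real n = \<rho> (\<lambda>\<omega>. X \<omega> + (- 1 / real n))" using rcash[OF XL, of "- 1 / real n"] by simp
  also have "\<dots> \<le> \<rho> (\<lambda>\<omega>. disc n N (X \<omega>))"
    by (rule rmono[OF Linf_add_const[OF XL] DL]) (use ae in \<open>eventually_elim, use disc_le[OF n] in force\<close>)
  finally show "\<rho> X - 1 / real n \<le> \<rho> (\<lambda>\<omega>. disc n N (X \<omega>))" .
qed

end

context
  fixes M :: "'w measure" and \<rho> :: "('w \<Rightarrow> real) \<Rightarrow> real"
  assumes pM: "prob_space M" and na: "nonatomic M" and sb: "standard_borel M"
    and rm: "risk_measure M \<rho>" and li: "law_invariant M \<rho>"
begin

lemmas fconc = finite_conc[OF pM na sb rm li]
lemmas drho = disc_rho[OF pM na sb rm li]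
lemmas laeb = law_AE_bound[OF pM na sb rm li]
lemmas lex2 = law_exists[OF pM na sb]
lemmas rme2 = rho_mu_eq[OF pM rm li]
lemmas rte2 = rho_tilde_eq[OF pM rm li]

lemma jconv_imp_conc3:
  assumes J: "\<forall>\<nu>1\<in>prob_measures (euclidean :: real topology). \<forall>\<nu>2\<in>prob_measures euclidean.
             \<forall>\<mu>1\<in>prob_measures euclidean. \<forall>\<mu>2\<in>prob_measures euclidean. \<forall>t\<in>{0..1::real}.
               divergence M \<rho> euclidean (mix_measure t \<nu>1 \<nu>2) (mix_measure t \<mu>1 \<mu>2)
                 \<le> ereal t * divergence M \<rho> euclidean \<nu>1 \<mu>1
                   + ereal (1 - t) * divergence M \<rho> euclidean \<nu>2 \<mu>2"
    and m1: "m1 \<in> compact_supp_prob" and m2: "m2 \<in> compact_supp_prob" and t: "t \<in> {0..1::real}"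
  shows "t * rho_tilde M \<rho> m1 + (1 - t) * rho_tilde M \<rho> m2 \<le> rho_tilde M \<rho> (mix_measure t m1 m2)"
proof -
  have t01: "0 \<le> t" "t \<le> 1" using t by auto
  obtain N1 where N1: "N1 \<ge> 0" "\<forall>N'\<ge>N1. emeasure m1 (UNIV - {-N'..N'}) = 0" using csp_bound[OF m1] by blast
  obtain N2 where N2: "N2 \<ge> 0" "\<forall>N'\<ge>N2. emeasure m2 (UNIV - {-N'..N'}) = 0" using csp_bound[OF m2] by blast
  define N where "N = max N1 N2"
  have N: "0 \<le> N" unfolding N_def using N1 by simp
  have z1: "emeasure m1 (UNIV - {-N..N}) = 0" using N1 unfolding N_def by simp
  have z2: "emeasure m2 (UNIV - {-N..N}) = 0" using N2 unfolding N_def by simp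
  have s: "sets m2 = sets m1" "sets m1 = sets borel" using m1 m2 unfolding compact_supp_prob_def by auto
  have p: "prob_space m1" "prob_space m2" using m1 m2 unfolding compact_supp_prob_def by auto
  have zm: "emeasure (mix_measure t m1 m2) (UNIV - {-N..N}) = 0"
    by (simp add: emeasure_mix[OF t01 s(1)] z1 z2)
  have mm: "mix_measure t m1 m2 \<in> compact_supp_prob"
    unfolding compact_supp_prob_def using prob_space_mix[OF t01 s(1) p] sets_mix[OF t01 s(1)] s(2) zm
    by (auto intro!: exI[of _ "{-N..N}"])
  have getX: "\<exists>X. X \<in> borel_measurable M \<and> distr M borel X = m \<and> X \<in> Linf M \<and> rho_tilde M \<rho> m = \<rho> X
      \<and> (AE \<omega> in M. \<bar>X \<omega>\<bar> \<le> N)"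
    if m: "m \<in> compact_supp_prob" and z: "emeasure m (UNIV - {-N..N}) = 0" for m
  proof -
    obtain X where X: "X \<in> M \<rightarrow>\<^sub>M borel_of euclidean" and law: "distr M (borel_of euclidean) X = m"
      using lex2[OF Polish_space_euclidean_real csp_prob_measures[OF m]] by blast
    have Xb: "X \<in> borel_measurable M" using X by (simp add: borel_of_euclidean)
    have law': "distr M borel X = m" using law by (simp add: borel_of_euclidean)
    have ae: "AE \<omega> in M. \<bar>X \<omega>\<bar> \<le> N" by (rule laeb[OF Xb law' z])
    have XL: "X \<in> Linf M" by (rule drho(1)[OF Xb ae order_refl N])
    show ?thesis using Xb law' XL rte2[OF XL law'] ae by blast
  qed
  obtain X1 where X1: "X1 \<in> borel_measurable M" "distr M borel X1 = m1" "X1 \<in> Linf M"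
      "rho_tilde M \<rho> m1 = \<rho> X1" "AE \<omega> in M. \<bar>X1 \<omega>\<bar> \<le> N" using getX[OF m1 z1] by blast
  obtain X2 where X2: "X2 \<in> borel_measurable M" "distr M borel X2 = m2" "X2 \<in> Linf M"
      "rho_tilde M \<rho> m2 = \<rho> X2" "AE \<omega> in M. \<bar>X2 \<omega>\<bar> \<le> N" using getX[OF m2 z2] by blast
  obtain Y where Y: "Y \<in> borel_measurable M" "distr M borel Y = mix_measure t m1 m2" "Y \<in> Linf M"
      "rho_tilde M \<rho> (mix_measure t m1 m2) = \<rho> Y" "AE \<omega> in M. \<bar>Y \<omega>\<bar> \<le> N" using getX[OF mm zm] by blast
  have "t * \<rho> X1 + (1 - t) * \<rho> X2 \<le> \<rho> Y"
  proof (rule eps_nat)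
    fix n :: nat assume n: "n \<ge> 1"
    define D where "D = disc n N"
    have Dm: "D \<in> borel_measurable borel" unfolding D_def by simp
    define Sn where "Sn = (\<lambda>k. real_of_int k / real n) ` {\<lfloor>- (real n * N)\<rfloor>..\<lfloor>real n * N\<rfloor>}"
    have Sn: "finite Sn" unfolding Sn_def by simp
    have DS: "D x \<in> Sn" for x unfolding D_def Sn_def by (rule disc_range[OF n N])
    have N1': "0 \<le> N + 1" using N by simp
    have key: "distr m borel D \<in> prob_measures euclidean \<and> emeasure (distr m borel D) (UNIV - Sn) = 0
        \<and> rho_mu M \<rho> euclidean (distr m borel D) (clamp (N + 1)) = \<rho> (\<lambda>\<omega>. D (X \<omega>))"
      if X: "X \<in> borel_measurable M" and law: "distr M borel X = m" for X m
    proof (intro conjI)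
      have pm: "prob_space m" using law X by (auto intro: prob_space.prob_space_distr[OF pM])
      have sm: "sets m = sets borel" using law by auto
      have Dmm: "D \<in> m \<rightarrow>\<^sub>M borel" using Dm measurable_cong_sets[OF sm refl, of borel] by blast
      show "distr m borel D \<in> prob_measures euclidean"
        unfolding prob_measures_def borel_of_euclidean using prob_space.prob_space_distr[OF pm Dmm] by simp
      have Sb: "UNIV - Sn \<in> sets (borel :: real measure)"
      proof -
        have "Sn \<in> sets borel" using finite_imp_closed[OF Sn] by (rule borel_closed)
        then show ?thesis using sets.compl_sets[of Sn borel] by simp
      qed
      have "D -` (UNIV - Sn) \<inter> space m = {}" using DS by auto
      then show "emeasure (distr m borel D) (UNIV - Sn) = 0"
        using Sb Dmm by (subst emeasure_distr) auto
      have DX: "(\<lambda>\<omega>. D (X \<omega>)) \<in> M \<rightarrow>\<^sub>M borel_of euclidean"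
        unfolding borel_of_euclidean using Dm X by (rule measurable_compose[rotated])
      have lawD: "distr M (borel_of euclidean) (\<lambda>\<omega>. D (X \<omega>)) = distr m borel D"
        unfolding borel_of_euclidean law[symmetric] by (subst distr_distr[OF Dm X]) (simp add: comp_def)
      have "rho_mu M \<rho> euclidean (distr m borel D) (clamp (N + 1)) = \<rho> (\<lambda>\<omega>. clamp (N + 1) (D (X \<omega>)))"
        by (rule rme2[OF DX lawD clamp_bbf[OF N1']])
      also have "(\<lambda>\<omega>. clamp (N + 1) (D (X \<omega>))) = (\<lambda>\<omega>. D (X \<omega>))"
        unfolding D_def using clamp_disc[OF n N] by simp
      finally show "rho_mu M \<rho> euclidean (distr m borel D) (clamp (N + 1)) = \<rho> (\<lambda>\<omega>. D (X \<omega>))" .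
    qed
    note k1 = key[OF X1(1,2)] and k2 = key[OF X2(1,2)] and k3 = key[OF Y(1,2)]
    have sD: "sets (distr m2 borel D) = sets (distr m1 borel D)" by simp
    have Dm1: "D \<in> m1 \<rightarrow>\<^sub>M borel" using Dm measurable_cong_sets[OF s(2) refl, of borel] by blast
    have dm: "distr (mix_measure t m1 m2) borel D = mix_measure t (distr m1 borel D) (distr m2 borel D)"
      by (rule distr_mix[OF t01 s(1) Dm1])
    have "t * \<rho> (\<lambda>\<omega>. D (X1 \<omega>)) + (1 - t) * \<rho> (\<lambda>\<omega>. D (X2 \<omega>)) \<le> \<rho> (\<lambda>\<omega>. D (Y \<omega>))"
      using fconc[OF J conjunct1[OF k1] conjunct1[OF k2] Sn conjunct1[OF conjunct2[OF k1]]
          conjunct1[OF conjunct2[OF k2]] clamp_bbf[OF N1'] t]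
        k1 k2 k3 unfolding dm[symmetric] by simp
    moreover have "\<rho> X1 - 1 / real n \<le> \<rho> (\<lambda>\<omega>. D (X1 \<omega>))" unfolding D_def by (rule drho(2)[OF X1(1) X1(5) n N])
    moreover have "\<rho> X2 - 1 / real n \<le> \<rho> (\<lambda>\<omega>. D (X2 \<omega>))" unfolding D_def by (rule drho(2)[OF X2(1) X2(5) n N])
    moreover have "\<rho> (\<lambda>\<omega>. D (Y \<omega>)) \<le> \<rho> Y" unfolding D_def by (rule drho(3)[OF Y(1) Y(5) n N])
    ultimately have "t * (\<rho> X1 - 1 / real n) + (1 - t) * (\<rho> X2 - 1 / real n) \<le> \<rho> Y"
      using t01 by (smt (verit) mult_left_mono)
    moreover have "t * (\<rho> X1 - 1 / real n) + (1 - t) * (\<rho> X2 - 1 / real n)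
        = t * \<rho> X1 + (1 - t) * \<rho> X2 - (t + (1 - t)) * (1 / real n)" by algebra
    ultimately show "t * \<rho> X1 + (1 - t) * \<rho> X2 - 1 / real n \<le> \<rho> Y" by simp
  qed
  then show ?thesis using X1(4) X2(4) Y(4) by simp
qed

end


theorem proposition4p1:
  fixes M :: "'w measure" and \<rho> :: "('w \<Rightarrow> real) \<Rightarrow> real"
  assumes "prob_space M" and "nonatomic M" and "standard_borel M"
    and "risk_measure M \<rho>" and "law_invariant M \<rho>"
  shows "((\<forall>T :: real topology. Polish_space T \<longrightarrow>
            (\<forall>\<nu>1\<in>prob_measures T. \<forall>\<nu>2\<in>prob_measures T.
             \<forall>\<mu>1\<in>prob_measures T. \<forall>\<mu>2\<in>prob_measures T. \<forall>t\<in>{0..1::real}.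
               divergence M \<rho> T (mix_measure t \<nu>1 \<nu>2) (mix_measure t \<mu>1 \<mu>2)
                 \<le> ereal t * divergence M \<rho> T \<nu>1 \<mu>1
                   + ereal (1 - t) * divergence M \<rho> T \<nu>2 \<mu>2))
          \<longleftrightarrow>
          (\<forall>T :: real topology. Polish_space T \<longrightarrow>
            (\<forall>f\<in>bounded_borel_funs T.
             \<forall>\<mu>1\<in>prob_measures T. \<forall>\<mu>2\<in>prob_measures T. \<forall>t\<in>{0..1::real}.
               t * rho_mu M \<rho> T \<mu>1 f + (1 - t) * rho_mu M \<rho> T \<mu>2 f
                 \<le> rho_mu M \<rho> T (mix_measure t \<mu>1 \<mu>2) f)))
       \<and> ((\<forall>T :: real topology. Polish_space T \<longrightarrow>
            (\<forall>f\<in>bounded_borel_funs T.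
             \<forall>\<mu>1\<in>prob_measures T. \<forall>\<mu>2\<in>prob_measures T. \<forall>t\<in>{0..1::real}.
               t * rho_mu M \<rho> T \<mu>1 f + (1 - t) * rho_mu M \<rho> T \<mu>2 f
                 \<le> rho_mu M \<rho> T (mix_measure t \<mu>1 \<mu>2) f))
          \<longleftrightarrow>
          (\<forall>m1\<in>compact_supp_prob. \<forall>m2\<in>compact_supp_prob. \<forall>t\<in>{0..1::real}.
             t * rho_tilde M \<rho> m1 + (1 - t) * rho_tilde M \<rho> m2
               \<le> rho_tilde M \<rho> (mix_measure t m1 m2)))"
proof -
  note A = assms
  let ?J = "\<lambda>T :: real topology. \<forall>\<nu>1\<in>prob_measures T. \<forall>\<nu>2\<in>prob_measures T.
             \<forall>\<mu>1\<in>prob_measures T. \<forall>\<mu>2\<in>prob_measures T. \<forall>t\<in>{0..1::real}.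
               divergence M \<rho> T (mix_measure t \<nu>1 \<nu>2) (mix_measure t \<mu>1 \<mu>2)
                 \<le> ereal t * divergence M \<rho> T \<nu>1 \<mu>1
                   + ereal (1 - t) * divergence M \<rho> T \<nu>2 \<mu>2"
  let ?K = "\<lambda>T :: real topology. \<forall>f\<in>bounded_borel_funs T.
             \<forall>\<mu>1\<in>prob_measures T. \<forall>\<mu>2\<in>prob_measures T. \<forall>t\<in>{0..1::real}.
               t * rho_mu M \<rho> T \<mu>1 f + (1 - t) * rho_mu M \<rho> T \<mu>2 f
                 \<le> rho_mu M \<rho> T (mix_measure t \<mu>1 \<mu>2) f"
  let ?C = "\<forall>m1\<in>compact_supp_prob. \<forall>m2\<in>compact_supp_prob. \<forall>t\<in>{0..1::real}.
             t * rho_tilde M \<rho> m1 + (1 - t) * rho_tilde M \<rho> m2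
               \<le> rho_tilde M \<rho> (mix_measure t m1 m2)"
  have AC: "?C" if H: "\<forall>T. Polish_space T \<longrightarrow> ?J T"
  proof (intro ballI)
    fix m1 m2 t assume m: "m1 \<in> compact_supp_prob" "m2 \<in> compact_supp_prob" "t \<in> {0..1::real}"
    have J: "?J euclidean" using H Polish_space_euclidean_real by blast
    show "t * rho_tilde M \<rho> m1 + (1 - t) * rho_tilde M \<rho> m2 \<le> rho_tilde M \<rho> (mix_measure t m1 m2)"
      by (rule jconv_imp_conc3[OF A J m])
  qed
  have CB: "\<forall>T. Polish_space T \<longrightarrow> ?K T" if H: "?C"
  proof (intro allI impI ballI)
    fix T :: "real topology" and f \<mu>1 \<mu>2 t
    assume PT: "Polish_space T" and f: "f \<in> bounded_borel_funs T"
      and m: "\<mu>1 \<in> prob_measures T" "\<mu>2 \<in> prob_measures T" "t \<in> {0..1::real}"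
    show "t * rho_mu M \<rho> T \<mu>1 f + (1 - t) * rho_mu M \<rho> T \<mu>2 f \<le> rho_mu M \<rho> T (mix_measure t \<mu>1 \<mu>2) f"
      by (rule conc3_imp_conc2[OF A H PT f m])
  qed
  have BA: "\<forall>T. Polish_space T \<longrightarrow> ?J T" if H: "\<forall>T. Polish_space T \<longrightarrow> ?K T"
  proof (intro allI impI ballI)
    fix T :: "real topology" and \<nu>1 \<nu>2 \<mu>1 \<mu>2 t
    assume PT: "Polish_space T" and n: "\<nu>1 \<in> prob_measures T" "\<nu>2 \<in> prob_measures T"
      and m: "\<mu>1 \<in> prob_measures T" "\<mu>2 \<in> prob_measures T" "t \<in> {0..1::real}"
    have K: "?K T" using H PT by blast
    show "divergence M \<rho> T (mix_measure t \<nu>1 \<nu>2) (mix_measure t \<mu>1 \<mu>2)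
        \<le> ereal t * divergence M \<rho> T \<nu>1 \<mu>1 + ereal (1 - t) * divergence M \<rho> T \<nu>2 \<mu>2"
      by (rule conc_imp_jconv[OF A(1,4,5) K n m])
  qed
  have BC: "?C" if H: "\<forall>T. Polish_space T \<longrightarrow> ?K T"
  proof (intro ballI)
    fix m1 m2 t assume m: "m1 \<in> compact_supp_prob" "m2 \<in> compact_supp_prob" "t \<in> {0..1::real}"
    have K: "?K euclidean" using H Polish_space_euclidean_real by blast
    show "t * rho_tilde M \<rho> m1 + (1 - t) * rho_tilde M \<rho> m2 \<le> rho_tilde M \<rho> (mix_measure t m1 m2)"
      by (rule conc2_imp_conc3[OF A K m])
  qed
  show ?thesis
  proof (intro conjI iffI)
    assume "\<forall>T. Polish_space T \<longrightarrow> ?J T" then show "\<forall>T. Polish_space T \<longrightarrow> ?K T" by (intro CB AC)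
  next
    assume "\<forall>T. Polish_space T \<longrightarrow> ?K T" then show "\<forall>T. Polish_space T \<longrightarrow> ?J T" by (rule BA)
  next
    assume "\<forall>T. Polish_space T \<longrightarrow> ?K T" then show ?C by (rule BC)
  next
    assume ?C then show "\<forall>T. Polish_space T \<longrightarrow> ?K T" by (rule CB)
  qed
qed

end
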